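(* Let $E\subset\mathbb R$ be a compact interval, $b:[0,T]\times E\to\mathbb R$ continuous, $Z^{t,z}_s=z+\int_t^s b(r,Z^{t,z}_r)dr$ staying in $E$, and consider $$\frac{\partial}{\partial t}u(t,z)+b(t,z)\frac{\partial}{\partial z}u(t,z)+g^z(t,u_t)=0,\qquad u(T,z)=h(z)\ \ \forall z\in E,$$ under the assumptions: (a-1) $b$ is locally Lipschitz-continuous; (a-2) $g:[0,T]\times\mathcal C_b(E)\to\mathcal C_b(E)$ satisfies $\|g(t,v_1)-g(t,v_2)\|_\infty\le L\|v_1-v_2\|_\infty$ for some $L<\infty$ and all $t,v_1,v_2$; (a-3) $h\in\mathcal C_b(E)$; and additionally (b-1) $b$ has a uniformly bounded continuous derivative $\partial b/\partial z$; (b-2) for every $v\in\mathcal C^1_b(E)$, $g^z(t,v)$ is differentiable in $z$ with $\frac{\partial}{\partial z}g^z(t,v)=\hat g^z(t,\frac{\partial}{\partial z}v)$ for some continuous function $\hat g:[0,T]\times\mathcal C_b(E)\to\mathcal C_b(E)$ such that there are constants $L',K$ with $\|\hat g(s,v_s)\|_\infty\le L'\|v_s\|_\infty+K$, and such that for every $R>0$, $\hat g$ is uniformly continuous on $[0,T]\times\mathcal C^R_b(E)\times E$ where $\mathcal C^R_b(E)=\{v\in\mathcal C_b(E):\|v\|_\infty\le R\}$; (b-3) $h\in\mathcal C^1_b(E)$. Then the unique weak (distributional) solution $\hat u\in\mathcal C_b([0,T]\times E)$, given by $\hat u(t,z)=h(Z^{t,z}_T)+\int_t^Tg^{Z^{t,z}_s}(s,\hat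 u_s)ds$, is differentiable in the space variable and is therefore also the strong solution of the boundary problem.
   Context: $u_t=u(t,\cdot)$; $g^z(t,v)$ denotes the value at $z\in E$ of $g(t,v)\in\mathcal C_b(E)$, similarly $\hat g^z$. $\mathcal C_b(E)$ and $\mathcal C^1_b(E)$ are the bounded continuous, resp. bounded continuously differentiable with bounded derivative, functions on $E$; $\|\cdot\|_\infty$ is the sup norm. *)

theory Defs
  imports "HOL-Analysis.Analysis"
begin

text \<open>Functions on the compact set E are represented as total functions real => real;
only their values on E matter.  Since E is compact, C_b(E) is just C(E).\<close>

definition Cb :: "real set \<Rightarrow> (real \<Rightarrow> real) set" where
  "Cb E = {v. continuous_on E v}"

definition supE :: "real set \<Rightarrow> (real \<Rightarrow> real) \<Rightarrow> real" where
  "supE E v = (SUP z\<in>E. \<bar>v z\<bar>)"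

definition C1b_deriv :: "real set \<Rightarrow> (real \<Rightarrow> real) \<Rightarrow> (real \<Rightarrow> real) \<Rightarrow> bool" where
  "C1b_deriv E v v' \<longleftrightarrow> continuous_on E v \<and> continuous_on E v' \<and>
     (\<exists>M. \<forall>z\<in>E. \<bar>v' z\<bar> \<le> M) \<and>
     (\<forall>z\<in>E. (v has_real_derivative v' z) (at z within E))"

end

theory Submission
  imports Defs
begin


lemma uc_pair:
  fixes f :: "real \<times> real \<Rightarrow> real"
  assumes "compact S" "continuous_on S f" "e > 0"
  shows "\<exists>d>0. \<forall>a b a' b'. (a,b)\<in>S \<longrightarrow> (a',b')\<in>S \<longrightarrow> \<bar>a-a'\<bar> < d \<longrightarrow> \<bar>b-b'\<bar> < d
            \<longrightarrow> \<bar>f (a,b) - f (a',b')\<bar> < e"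
proof -
  from compact_uniformly_continuous[OF assms(2,1)] assms(3) obtain d where
    d: "d>0" "\<forall>x\<in>S. \<forall>x'\<in>S. dist x' x < d \<longrightarrow> dist (f x') (f x) < e"
    unfolding uniformly_continuous_on_def by metis
  show ?thesis
  proof (intro exI[of _ "d/2"] conjI allI impI)
    show "d/2 > 0" using d by simp
    fix a b a' b' assume h: "(a,b)\<in>S" "(a',b')\<in>S" "\<bar>a-a'\<bar> < d/2" "\<bar>b-b'\<bar> < d/2"
    have "dist (a,b) (a',b') \<le> dist a a' + dist b b'" by (metis diff_Pair dist_norm norm_Pair_le)
    then have "dist (a,b) (a',b') < d" using h by (simp add: dist_real_def)
    then show "\<bar>f (a,b) - f (a',b')\<bar> < e" using d(2) h(1,2) by (auto simp: dist_real_def)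
  qed
qed

lemma uc_triple:
  fixes f :: "real \<times> real \<times> real \<Rightarrow> real"
  assumes "compact S" "continuous_on S f" "e > 0"
  shows "\<exists>d>0. \<forall>a b c a' b' c'. (a,b,c)\<in>S \<longrightarrow> (a',b',c')\<in>S \<longrightarrow> \<bar>a-a'\<bar> < d \<longrightarrow> \<bar>b-b'\<bar> < d
            \<longrightarrow> \<bar>c-c'\<bar> < d \<longrightarrow> \<bar>f (a,b,c) - f (a',b',c')\<bar> < e"
proof -
  from compact_uniformly_continuous[OF assms(2,1)] assms(3) obtain d where
    d: "d>0" "\<forall>x\<in>S. \<forall>x'\<in>S. dist x' x < d \<longrightarrow> dist (f x') (f x) < e"
    unfolding uniformly_continuous_on_def by metis
  show ?thesis
  proof (intro exI[of _ "d/3"] conjI allI impI)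
    show "d/3 > 0" using d by simp
    fix a b c a' b' c' assume h: "(a,b,c)\<in>S" "(a',b',c')\<in>S" "\<bar>a-a'\<bar> < d/3" "\<bar>b-b'\<bar> < d/3" "\<bar>c-c'\<bar> < d/3"
    have "dist (a,b,c) (a',b',c') \<le> dist a a' + dist (b,c) (b',c')" by (metis diff_Pair dist_norm norm_Pair_le)
    also have "dist (b,c) (b',c') \<le> dist b b' + dist c c'" by (metis diff_Pair dist_norm norm_Pair_le)
    finally have "dist (a,b,c) (a',b',c') < d" using h by (simp add: dist_real_def)
    then show "\<bar>f (a,b,c) - f (a',b',c')\<bar> < e" using d(2) h(1,2) by (auto simp: dist_real_def)
  qed
qed

lemma int_bound:
  fixes f :: "real \<Rightarrow> real"
  assumes "a \<le> b" "f integrable_on {a..b}" "\<And>x. x\<in>{a..b} \<Longrightarrow> \<bar>f x\<bar> \<le> M"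
  shows "\<bar>integral {a..b} f\<bar> \<le> M * (b - a)"
proof -
  have "0 \<le> M" using assms(3)[of a] assms(1) by auto
  have "norm (integral {a..b} f) \<le> M * (b - a)"
    using has_integral_bound[OF \<open>0 \<le> M\<close>, of f "integral {a..b} f" a b] assms
    by (simp add: integrable_integral)
  then show ?thesis by simp
qed

lemma int_split:
  fixes f :: "real \<Rightarrow> real"
  assumes "a \<le> b" "b \<le> c" "f integrable_on {a..c}"
  shows "integral {a..c} f = integral {a..b} f + integral {b..c} f"
  using Henstock_Kurzweil_Integration.integral_combine[OF assms(1,2,3)] by simp

lemma gronwall:
  fixes \<phi> :: "real \<Rightarrow> real"
  assumes ts: "t \<le> s" and c: "continuous_on {t..s} \<phi>" and a: "0 \<le> a" and K: "0 \<le> K"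
    and le: "\<And>\<sigma>. \<sigma> \<in> {t..s} \<Longrightarrow> \<phi> \<sigma> \<le> a + K * integral {t..\<sigma>} \<phi>"
  shows "\<phi> s \<le> a * exp (K * (s - t))"
proof -
  define I where "I \<sigma> = integral {t..\<sigma>} \<phi>" for \<sigma>
  define \<psi> where "\<psi> \<sigma> = exp (- K * (\<sigma> - t)) * (a + K * I \<sigma>)" for \<sigma>
  define D where "D \<sigma> = exp (- K * (\<sigma> - t)) * (K * \<phi> \<sigma>) + (- K) * exp (- K * (\<sigma> - t)) * (a + K * I \<sigma>)" for \<sigma>
  have dI: "(I has_real_derivative \<phi> \<sigma>) (at \<sigma> within {t..s})" if "\<sigma> \<in> {t..s}" for \<sigma>
    unfolding I_def by (rule integral_has_real_derivative[OF c that])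
  have d\<psi>: "(\<psi> has_real_derivative D \<sigma>) (at \<sigma> within {t..s})" if "\<sigma> \<in> {t..s}" for \<sigma>
    unfolding \<psi>_def D_def
    by (rule derivative_eq_intros dI[OF that] refl | simp)+
  have Dn: "D \<sigma> \<le> 0" if "\<sigma> \<in> {t..s}" for \<sigma>
  proof -
    have "K * \<phi> \<sigma> \<le> K * (a + K * I \<sigma>)" using le[OF that] K unfolding I_def by (simp add: mult_left_mono)
    then have "exp (- K * (\<sigma> - t)) * (K * \<phi> \<sigma>) \<le> exp (- K * (\<sigma> - t)) * (K * (a + K * I \<sigma>))"
      by (simp add: mult_left_mono)
    then show ?thesis unfolding D_def by (simp add: algebra_simps)
  qed
  have "\<psi> s \<le> \<psi> t"
  proof (cases "t < s")
    case True
    have "\<exists>x\<in>{t<..<s}. \<psi> s - \<psi> t = (*) (D x) (s - t)"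
      by (rule mvt_simple[OF True, of \<psi> "\<lambda>x. (*) (D x)"]) (use d\<psi> in \<open>auto simp: has_field_derivative_def\<close>)
    then obtain x where "x \<in> {t<..<s}" "\<psi> s - \<psi> t = (s - t) * D x" by auto
    moreover have "D x \<le> 0" using Dn \<open>x \<in> {t<..<s}\<close> by auto
    moreover have "(s - t) * D x \<le> 0" using True \<open>D x \<le> 0\<close> by (simp add: mult_nonneg_nonpos)
    ultimately show ?thesis by linarith
  qed (use ts in auto)
  then have "exp (- K * (s - t)) * (a + K * I s) \<le> a" unfolding \<psi>_def I_def by simp
  then have h1: "exp (K * (s - t)) * (exp (- K * (s - t)) * (a + K * I s)) \<le> exp (K * (s - t)) * a"
    by (rule mult_left_mono) simp
  have "exp (K * (s - t)) * exp (- K * (s - t)) = 1" by (simp add: exp_add[symmetric])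
  then have eq: "exp (K * (s - t)) * (exp (- K * (s - t)) * (a + K * I s)) = a + K * I s"
    by (metis mult.assoc mult_1)
  have "a + K * I s \<le> a * exp (K * (s - t))" using h1 unfolding eq by (metis mult.commute)
  then show ?thesis using le[of s] ts unfolding I_def by auto
qed

lemma unif_deriv:
  fixes f f' :: "real \<Rightarrow> real"
  assumes S: "convex S" and df: "\<And>x. x \<in> S \<Longrightarrow> (f has_real_derivative f' x) (at x within S)"
    and xy: "x \<in> S" "y \<in> S"
    and close: "\<And>\<xi>. \<xi> \<in> S \<Longrightarrow> \<bar>\<xi> - x\<bar> \<le> \<bar>y - x\<bar> \<Longrightarrow> \<bar>f' \<xi> - f' x\<bar> \<le> \<eta>"
  shows "\<bar>f y - f x - f' x * (y - x)\<bar> \<le> \<eta> * \<bar>y - x\<bar>"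
proof -
  define S' where "S' = closed_segment x y"
  have sub: "S' \<subseteq> S" unfolding S'_def using S xy by (simp add: closed_segment_subset)
  have mem: "\<bar>\<xi> - x\<bar> \<le> \<bar>y - x\<bar>" if "\<xi> \<in> S'" for \<xi>
    using that unfolding S'_def closed_segment_eq_real_ivl by (auto split: if_splits)
  have "norm ((\<lambda>\<xi>. f \<xi> - f' x * \<xi>) y - (\<lambda>\<xi>. f \<xi> - f' x * \<xi>) x) \<le> \<eta> * norm (y - x)"
  proof (rule field_differentiable_bound[where f' = "\<lambda>\<xi>. f' \<xi> - f' x" and S = S'])
    show "convex S'" unfolding S'_def by simp
    fix z assume z: "z \<in> S'"
    show "((\<lambda>\<xi>. f \<xi> - f' x * \<xi>) has_field_derivative f' z - f' x) (at z within S')"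
      by (rule derivative_eq_intros has_field_derivative_subset[OF df sub] | use z sub in auto)+
    show "norm (f' z - f' x) \<le> \<eta>" using close[of z] z sub mem[OF z] by auto
  qed (auto simp: S'_def)
  then show ?thesis by (simp add: algebra_simps)
qed

lemma param_int_cont:
  fixes F :: "'a::metric_space \<Rightarrow> real \<Rightarrow> real"
  assumes P: "compact P" and Fc: "continuous_on (P \<times> {a0..b0}) (\<lambda>(p,x). F p x)" and ab: "a0 \<le> b0"
  shows "continuous_on (P \<times> {a0..b0}) (\<lambda>(p,x). integral {a0..x} (F p))"
proof -
  have cpt: "compact (P \<times> {a0..b0})" using P by (simp add: compact_Times)
  obtain MF where MF: "\<And>z. z \<in> P \<times> {a0..b0} \<Longrightarrow> \<bar>(\<lambda>(p,x). F p x) z\<bar> \<le> MF"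
    using compact_imp_bounded[OF compact_continuous_image[OF Fc cpt]]
    unfolding bounded_iff by force
  have Fp: "continuous_on {a0..b0} (F p)" if "p \<in> P" for p
  proof -
    have "continuous_on {a0..b0} ((\<lambda>(p,x). F p x) \<circ> (\<lambda>x. (p,x)))"
      by (rule continuous_on_compose[OF _ continuous_on_subset[OF Fc]]) (auto intro!: continuous_intros simp: that)
    then show ?thesis by (simp add: o_def)
  qed
  have uc: "uniformly_continuous_on (P \<times> {a0..b0}) (\<lambda>(p,x). F p x)"
    by (rule compact_uniformly_continuous[OF Fc cpt])
  show ?thesis unfolding continuous_on_iff
  proof (intro ballI allI impI)
    fix z e assume z: "z \<in> P \<times> {a0..b0}" and e: "(0::real) < e"
    obtain p x where zpx: "z = (p,x)" by force
    have p: "p \<in> P" and x: "x \<in> {a0..b0}" using z zpx by auto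
    define e1 where "e1 = e / (2 * (b0 - a0 + 1))"
    have e1: "e1 > 0" using e ab by (simp add: e1_def)
    obtain d1 where d1: "d1 > 0" "\<forall>z1\<in>P \<times> {a0..b0}. \<forall>z2\<in>P \<times> {a0..b0}. dist z2 z1 < d1 \<longrightarrow>
         dist ((\<lambda>(p,x). F p x) z2) ((\<lambda>(p,x). F p x) z1) < e1"
      using uc e1 unfolding uniformly_continuous_on_def by metis
    have MF0: "0 \<le> MF" using MF[of "(p,x)"] p x by auto
    define d where "d = min d1 (e / (2 * (MF + 1)))"
    have d: "d > 0" using d1 e MF0 by (simp add: d_def)
    show "\<exists>d>0. \<forall>z'\<in>P \<times> {a0..b0}. dist z' z < d \<longrightarrow>
          dist ((\<lambda>(p,x). integral {a0..x} (F p)) z') ((\<lambda>(p,x). integral {a0..x} (F p)) z) < e"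
    proof (intro exI[of _ d] conjI ballI impI d)
      fix z' assume z': "z' \<in> P \<times> {a0..b0}" and dz: "dist z' z < d"
      obtain p' x' where zpx': "z' = (p',x')" by force
      have p': "p' \<in> P" and x': "x' \<in> {a0..b0}" using z' zpx' by auto
      have dp: "dist p' p < d1" and dx: "\<bar>x' - x\<bar> < d"
        using dz dist_fst_le[of z' z] dist_snd_le[of z' z] unfolding zpx zpx' d_def
        by (auto simp: dist_real_def)
      have A: "\<bar>integral {a0..x} (F p') - integral {a0..x} (F p)\<bar> \<le> e1 * (x - a0)"
      proof -
        have "integral {a0..x} (F p') - integral {a0..x} (F p) = integral {a0..x} (\<lambda>\<xi>. F p' \<xi> - F p \<xi>)"
          using Fp[OF p] Fp[OF p'] x
          by (subst integral_diff) (auto intro!: integrable_continuous_interval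
                 intro: continuous_on_subset)
        also have "\<bar>\<dots>\<bar> \<le> e1 * (x - a0)"
        proof (rule int_bound)
          show "(\<lambda>\<xi>. F p' \<xi> - F p \<xi>) integrable_on {a0..x}"
            using Fp[OF p] Fp[OF p'] x
            by (auto intro!: integrable_continuous_interval continuous_intros intro: continuous_on_subset)
          fix \<xi> assume "\<xi> \<in> {a0..x}"
          then have "\<xi> \<in> {a0..b0}" using x by auto
          moreover have "dist (p',\<xi>) (p,\<xi>) < d1" using dp by (simp add: dist_Pair_Pair)
          ultimately show "\<bar>F p' \<xi> - F p \<xi>\<bar> \<le> e1"
            using d1(2) p p' by (force simp: dist_real_def)
        qed (use x in auto)
        finally show ?thesis .
      qed
      have B: "\<bar>integral {a0..x'} (F p') - integral {a0..x} (F p')\<bar> \<le> MF * \<bar>x' - x\<bar>"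
      proof -
        have Fint: "F p' integrable_on {a0..b0}" using Fp[OF p'] by (rule integrable_continuous_interval)
        have bnd: "\<bar>F p' \<xi>\<bar> \<le> MF" if "\<xi> \<in> {a0..b0}" for \<xi> using MF[of "(p',\<xi>)"] p' that by auto
        show ?thesis
        proof (cases "x \<le> x'")
          case True
          have "integral {a0..x'} (F p') = integral {a0..x} (F p') + integral {x..x'} (F p')"
            by (rule int_split) (use True x x' in \<open>auto intro: integrable_subinterval_real[OF Fint]\<close>)
          moreover have "\<bar>integral {x..x'} (F p')\<bar> \<le> MF * (x' - x)"
            by (rule int_bound) (use True x x' bnd in \<open>auto intro: integrable_subinterval_real[OF Fint]\<close>)
          ultimately show ?thesis using True by simp
        next
          case False
          have "integral {a0..x} (F p') = integral {a0..x'} (F p') + integral {x'..x} (F p')"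
            by (rule int_split) (use False x x' in \<open>auto intro: integrable_subinterval_real[OF Fint]\<close>)
          moreover have "\<bar>integral {x'..x} (F p')\<bar> \<le> MF * (x - x')"
            by (rule int_bound) (use False x x' bnd in \<open>auto intro: integrable_subinterval_real[OF Fint]\<close>)
          ultimately show ?thesis using False by simp
        qed
      qed
      have "e1 * (x - a0) \<le> e1 * (b0 - a0)" using e1 x by (simp add: mult_left_mono)
      also have "\<dots> < e / 2" unfolding e1_def using e ab by (simp add: field_simps)
      finally have A': "e1 * (x - a0) < e/2" .
      have "MF * \<bar>x' - x\<bar> \<le> MF * d" using dx MF0 by (simp add: mult_left_mono)
      also have "\<dots> \<le> MF * (e / (2 * (MF + 1)))" unfolding d_def by (rule mult_left_mono[OF min.cobounded2 MF0])
      also have "\<dots> < e / 2" using MF0 e by (simp add: field_simps)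
      finally have B': "MF * \<bar>x' - x\<bar> < e/2" .
      show "dist ((\<lambda>(p,x). integral {a0..x} (F p)) z') ((\<lambda>(p,x). integral {a0..x} (F p)) z) < e"
        unfolding zpx zpx' dist_real_def using A B A' B' by simp
    qed
  qed
qed


locale setting =
  fixes T l r L L' K B Mb H1 :: real
    and b bz :: "real \<Rightarrow> real \<Rightarrow> real"
    and Z :: "real \<Rightarrow> real \<Rightarrow> real \<Rightarrow> real"
    and g ghat :: "real \<Rightarrow> (real \<Rightarrow> real) \<Rightarrow> (real \<Rightarrow> real)"
    and h h' :: "real \<Rightarrow> real"
    and u :: "real \<Rightarrow> real \<Rightarrow> real"
  assumes lr: "l < r" and T: "0 < T"
    and b_cont: "continuous_on ({0..T} \<times> {l..r}) (\<lambda>(t, z). b t z)"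
    and B: "0 \<le> B" "\<And>t z. t \<in> {0..T} \<Longrightarrow> z \<in> {l..r} \<Longrightarrow> \<bar>b t z\<bar> \<le> B"
    and Z_in: "\<forall>t\<in>{0..T}. \<forall>z\<in>{l..r}. \<forall>s\<in>{t..T}. Z t z s \<in> {l..r}"
    and Z_ode: "\<forall>t\<in>{0..T}. \<forall>z\<in>{l..r}. \<forall>s\<in>{t..T}.
                  ((\<lambda>r. b r (Z t z r)) has_integral (Z t z s - z)) {t..s}"
    and g_Cb: "\<forall>t\<in>{0..T}. \<forall>v\<in>Cb {l..r}. g t v \<in> Cb {l..r}"
    and a2: "\<forall>t\<in>{0..T}. \<forall>v1\<in>Cb {l..r}. \<forall>v2\<in>Cb {l..r}.
               supE {l..r} (\<lambda>z. g t v1 z - g t v2 z) \<le> L * supE {l..r} (\<lambda>z. v1 z - v2 z)"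
    and b1_deriv: "\<forall>t\<in>{0..T}. \<forall>z\<in>{l..r}. (b t has_real_derivative bz t z) (at z within {l..r})"
    and b1_cont: "continuous_on ({0..T} \<times> {l..r}) (\<lambda>(t, z). bz t z)"
    and Mb: "0 \<le> Mb" "\<And>t z. t \<in> {0..T} \<Longrightarrow> z \<in> {l..r} \<Longrightarrow> \<bar>bz t z\<bar> \<le> Mb"
    and ghat_Cb: "\<forall>t\<in>{0..T}. \<forall>v\<in>Cb {l..r}. ghat t v \<in> Cb {l..r}"
    and b2_deriv: "\<forall>t\<in>{0..T}. \<forall>v v'. C1b_deriv {l..r} v v' \<longrightarrow>
               (\<forall>z\<in>{l..r}. (g t v has_real_derivative ghat t v' z) (at z within {l..r}))"
    and ghat_bound: "\<forall>s\<in>{0..T}. \<forall>v\<in>Cb {l..r}. supE {l..r} (ghat s v) \<le> L' * supE {l..r} v + K"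
    and ghat_unif: "\<forall>R>0. \<forall>\<epsilon>>0. \<exists>\<delta>>0.
               \<forall>t\<in>{0..T}. \<forall>t'\<in>{0..T}. \<forall>v\<in>Cb {l..r}. \<forall>v'\<in>Cb {l..r}. \<forall>z\<in>{l..r}. \<forall>z'\<in>{l..r}.
               supE {l..r} v \<le> R \<and> supE {l..r} v' \<le> R \<and>
               \<bar>t - t'\<bar> < \<delta> \<and> supE {l..r} (\<lambda>y. v y - v' y) < \<delta> \<and> \<bar>z - z'\<bar> < \<delta> \<longrightarrow>
               \<bar>ghat t v z - ghat t' v' z'\<bar> < \<epsilon>"
    and hd: "C1b_deriv {l..r} h h'"
    and H1: "\<And>z. z \<in> {l..r} \<Longrightarrow> \<bar>h' z\<bar> \<le> H1"
    and u_cont: "continuous_on ({0..T} \<times> {l..r}) (\<lambda>(t, z). u t z)"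
    and u_repr: "\<forall>t\<in>{0..T}. \<forall>z\<in>{l..r}.
               ((\<lambda>s. g s (u s) (Z t z s)) has_integral (u t z - h (Z t z T))) {t..T}"
begin

abbreviation "E \<equiv> {l..r}"

definition "Je = exp (Mb * T)"

lemma Je1: "1 \<le> Je" unfolding Je_def using Mb T by simp

lemma exp_le_Je: "0 \<le> x \<Longrightarrow> x \<le> T \<Longrightarrow> exp (Mb * x) \<le> Je"
  unfolding Je_def using Mb by (simp add: mult_left_mono)

lemma Zin: "t \<in> {0..T} \<Longrightarrow> y \<in> E \<Longrightarrow> s \<in> {t..T} \<Longrightarrow> Z t y s \<in> E"
  using Z_in by blast

lemma Zhas: "t \<in> {0..T} \<Longrightarrow> y \<in> E \<Longrightarrow> s \<in> {t..T} \<Longrightarrow>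
   ((\<lambda>r. b r (Z t y r)) has_integral (Z t y s - y)) {t..s}"
  using Z_ode by blast

lemma Zt: assumes "t \<in> {0..T}" "y \<in> E" shows "Z t y t = y"
proof -
  have A: "((\<lambda>r. b r (Z t y r)) has_integral (Z t y t - y)) {t..t}" by (rule Zhas) (use assms in auto)
  have B: "((\<lambda>r. b r (Z t y r)) has_integral 0) (cbox t t)" by (rule has_integral_refl(1))
  then have B': "((\<lambda>r. b r (Z t y r)) has_integral 0) {t..t}" by (simp only: box_real(2))
  from has_integral_unique[OF A B'] show ?thesis by simp
qed

lemma Zint: assumes "t \<in> {0..T}" "y \<in> E" "s \<in> {t..T}"
  shows "(\<lambda>r. b r (Z t y r)) integrable_on {t..s}" "Z t y s = y + integral {t..s} (\<lambda>r. b r (Z t y r))"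
proof -
  show "(\<lambda>r. b r (Z t y r)) integrable_on {t..s}" using Zhas[OF assms] by (rule has_integral_integrable)
  have "integral {t..s} (\<lambda>r. b r (Z t y r)) = Z t y s - y" using Zhas[OF assms] by (rule integral_unique)
  then show "Z t y s = y + integral {t..s} (\<lambda>r. b r (Z t y r))" by simp
qed

lemma Zlip_s: assumes t: "t \<in> {0..T}" and y: "y \<in> E" and s: "s \<in> {t..T}" "s' \<in> {t..T}"
  shows "\<bar>Z t y s - Z t y s'\<bar> \<le> B * \<bar>s - s'\<bar>"
proof -
  have *: "\<bar>Z t y s2 - Z t y s1\<bar> \<le> B * (s2 - s1)" if "s1 \<in> {t..T}" "s2 \<in> {t..T}" "s1 \<le> s2" for s1 s2
  proof -
    have int: "(\<lambda>r. b r (Z t y r)) integrable_on {t..s2}" using Zint(1)[OF t y that(2)] .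
    have "integral {t..s2} (\<lambda>r. b r (Z t y r)) = integral {t..s1} (\<lambda>r. b r (Z t y r)) + integral {s1..s2} (\<lambda>r. b r (Z t y r))"
      by (rule int_split) (use that int in auto)
    then have "Z t y s2 - Z t y s1 = integral {s1..s2} (\<lambda>r. b r (Z t y r))"
      using Zint(2)[OF t y that(1)] Zint(2)[OF t y that(2)] by simp
    also have "\<bar>\<dots>\<bar> \<le> B * (s2 - s1)"
    proof (rule int_bound)
      show "(\<lambda>r. b r (Z t y r)) integrable_on {s1..s2}"
        by (rule integrable_subinterval_real[OF int]) (use that in auto)
      fix x assume "x \<in> {s1..s2}"
      then have "x \<in> {0..T}" "x \<in> {t..T}" using that t by auto
      then show "\<bar>b x (Z t y x)\<bar> \<le> B" using B(2) Zin[OF t y] by blast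
    qed (use that in auto)
    finally show ?thesis .
  qed
  have c: "\<bar>Z t y s - Z t y s'\<bar> = \<bar>Z t y s' - Z t y s\<bar>" by (rule abs_minus_commute)
  show ?thesis
  proof (cases "s \<le> s'")
    case True
    then show ?thesis using *[of s s'] s c by simp
  next
    case False
    then show ?thesis using *[of s' s] s by simp
  qed
qed

lemma Zcont: assumes "t \<in> {0..T}" "y \<in> E" shows "continuous_on {t..T} (Z t y)"
proof (rule lipschitz_on_continuous_on)
  show "B-lipschitz_on {t..T} (Z t y)"
    by (rule lipschitz_onI) (use Zlip_s[OF assms] B in \<open>auto simp: dist_real_def\<close>)
qed

lemma comp_cont:
  fixes F :: "real \<Rightarrow> real \<Rightarrow> real" and X :: "real \<Rightarrow> real"
  assumes "continuous_on ({0..T} \<times> E) (\<lambda>(t, z). F t z)" "continuous_on S X" "S \<subseteq> {0..T}"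
    "\<And>s. s \<in> S \<Longrightarrow> X s \<in> E"
  shows "continuous_on S (\<lambda>s. F s (X s))"
proof -
  have "continuous_on S ((\<lambda>(t, z). F t z) \<circ> (\<lambda>s. (s, X s)))"
    by (rule continuous_on_compose[OF _ continuous_on_subset[OF assms(1)]])
       (use assms in \<open>auto intro!: continuous_intros\<close>)
  then show ?thesis by (simp add: o_def)
qed

lemma bZcont: assumes "t \<in> {0..T}" "y \<in> E" shows "continuous_on {t..T} (\<lambda>r. b r (Z t y r))"
  by (rule comp_cont[OF b_cont Zcont[OF assms]]) (use assms Zin in auto)

lemma bzZcont: assumes "t \<in> {0..T}" "y \<in> E" shows "continuous_on {t..T} (\<lambda>r. bz r (Z t y r))"
  by (rule comp_cont[OF b1_cont Zcont[OF assms]]) (use assms Zin in auto)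

lemma b_lip: assumes "s \<in> {0..T}" "x \<in> E" "x' \<in> E" shows "\<bar>b s x - b s x'\<bar> \<le> Mb * \<bar>x - x'\<bar>"
  using field_differentiable_bound[of E "b s" "bz s" Mb x x'] b1_deriv Mb assms by auto

lemma b_ud: assumes "\<eta> > 0"
  shows "\<exists>\<delta>>0. \<forall>s\<in>{0..T}. \<forall>x\<in>E. \<forall>x'\<in>E. \<bar>x' - x\<bar> < \<delta> \<longrightarrow>
            \<bar>b s x' - b s x - bz s x * (x' - x)\<bar> \<le> \<eta> * \<bar>x' - x\<bar>"
proof -
  obtain \<delta> where \<delta>: "\<delta> > 0" "\<forall>a b a' b'. (a,b)\<in>{0..T} \<times> E \<longrightarrow> (a',b')\<in>{0..T} \<times> E \<longrightarrow> \<bar>a-a'\<bar> < \<delta> \<longrightarrow> \<bar>b-b'\<bar> < \<delta>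
            \<longrightarrow> \<bar>(\<lambda>(t, z). bz t z) (a,b) - (\<lambda>(t, z). bz t z) (a',b')\<bar> < \<eta>"
    using uc_pair[OF _ b1_cont assms] by (auto simp: compact_Times)
  show ?thesis
  proof (intro exI[of _ \<delta>] conjI ballI impI \<delta>(1))
    fix s x x' assume h: "s \<in> {0..T}" "x \<in> E" "x' \<in> E" "\<bar>x' - x\<bar> < \<delta>"
    show "\<bar>b s x' - b s x - bz s x * (x' - x)\<bar> \<le> \<eta> * \<bar>x' - x\<bar>"
    proof (rule unif_deriv[of E])
      fix \<xi>
      assume a: "\<xi> \<in> E" "\<bar>\<xi> - x\<bar> \<le> \<bar>x' - x\<bar>"
      have m: "(s, \<xi>) \<in> {0..T} \<times> E" "(s, x) \<in> {0..T} \<times> E" "\<bar>s - s\<bar> < \<delta>" "\<bar>\<xi> - x\<bar> < \<delta>"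
        using a h \<delta>(1) by auto
      have "\<bar>bz s \<xi> - bz s x\<bar> < \<eta>" using \<delta>(2)[rule_format, OF m] by simp
      then show "\<bar>bz s \<xi> - bz s x\<bar> \<le> \<eta>" by simp
    qed (use h b1_deriv in auto)
  qed
qed

lemma sol_diff:
  fixes Z1 Z2 :: "real \<Rightarrow> real"
  assumes ts: "0 \<le> t" "t \<le> s" "s \<le> T" and c: "continuous_on {t..s} Z1" "continuous_on {t..s} Z2"
    and inE: "\<And>\<sigma>. \<sigma> \<in> {t..s} \<Longrightarrow> Z1 \<sigma> \<in> E \<and> Z2 \<sigma> \<in> E"
    and eq1: "\<And>\<sigma>. \<sigma> \<in> {t..s} \<Longrightarrow> Z1 \<sigma> = c1 + integral {t..\<sigma>} (\<lambda>\<rho>. b \<rho> (Z1 \<rho>))"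
    and eq2: "\<And>\<sigma>. \<sigma> \<in> {t..s} \<Longrightarrow> Z2 \<sigma> = c2 + integral {t..\<sigma>} (\<lambda>\<rho>. b \<rho> (Z2 \<rho>))"
  shows "\<bar>Z1 s - Z2 s\<bar> \<le> \<bar>c1 - c2\<bar> * exp (Mb * (s - t))"
proof -
  have bc1: "continuous_on {t..s} (\<lambda>\<rho>. b \<rho> (Z1 \<rho>))"
    by (rule comp_cont[OF b_cont c(1)]) (use ts inE in auto)
  have bc2: "continuous_on {t..s} (\<lambda>\<rho>. b \<rho> (Z2 \<rho>))"
    by (rule comp_cont[OF b_cont c(2)]) (use ts inE in auto)
  define \<phi> where "\<phi> \<sigma> = \<bar>Z1 \<sigma> - Z2 \<sigma>\<bar>" for \<sigma>
  have \<phi>c: "continuous_on {t..s} \<phi>" unfolding \<phi>_def by (intro continuous_intros c)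
  have "\<phi> s \<le> \<bar>c1 - c2\<bar> * exp (Mb * (s - t))"
  proof (rule gronwall[OF ts(2) \<phi>c _ Mb(1)])
    fix \<sigma> assume \<sigma>: "\<sigma> \<in> {t..s}"
    have sub: "{t..\<sigma>} \<subseteq> {t..s}" using \<sigma> by auto
    have i1: "(\<lambda>\<rho>. b \<rho> (Z1 \<rho>)) integrable_on {t..\<sigma>}"
      by (rule integrable_continuous_interval[OF continuous_on_subset[OF bc1 sub]])
    have i2: "(\<lambda>\<rho>. b \<rho> (Z2 \<rho>)) integrable_on {t..\<sigma>}"
      by (rule integrable_continuous_interval[OF continuous_on_subset[OF bc2 sub]])
    have i3: "\<phi> integrable_on {t..\<sigma>}"
      by (rule integrable_continuous_interval[OF continuous_on_subset[OF \<phi>c sub]])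
    have "Z1 \<sigma> - Z2 \<sigma> = (c1 - c2) + integral {t..\<sigma>} (\<lambda>\<rho>. b \<rho> (Z1 \<rho>) - b \<rho> (Z2 \<rho>))"
      using eq1[OF \<sigma>] eq2[OF \<sigma>] integral_diff[OF i1 i2] by simp
    moreover have "\<bar>integral {t..\<sigma>} (\<lambda>\<rho>. b \<rho> (Z1 \<rho>) - b \<rho> (Z2 \<rho>))\<bar> \<le> integral {t..\<sigma>} (\<lambda>\<rho>. Mb * \<phi> \<rho>)"
    proof -
      have "norm (integral {t..\<sigma>} (\<lambda>\<rho>. b \<rho> (Z1 \<rho>) - b \<rho> (Z2 \<rho>))) \<le> integral {t..\<sigma>} (\<lambda>\<rho>. Mb * \<phi> \<rho>)"
      proof (rule integral_norm_bound_integral)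
        show "(\<lambda>\<rho>. b \<rho> (Z1 \<rho>) - b \<rho> (Z2 \<rho>)) integrable_on {t..\<sigma>}" using i1 i2 by (rule integrable_diff)
        show "(\<lambda>\<rho>. Mb * \<phi> \<rho>) integrable_on {t..\<sigma>}"
          by (rule integrable_continuous_interval) (intro continuous_intros continuous_on_subset[OF \<phi>c sub])
        fix \<rho> assume "\<rho> \<in> {t..\<sigma>}"
        then have "\<rho> \<in> {0..T}" "Z1 \<rho> \<in> E" "Z2 \<rho> \<in> E" using inE[of \<rho>] \<sigma> ts by auto
        then show "norm (b \<rho> (Z1 \<rho>) - b \<rho> (Z2 \<rho>)) \<le> Mb * \<phi> \<rho>" unfolding \<phi>_def using b_lip by auto
      qed
      then show ?thesis by simp
    qed
    moreover have "integral {t..\<sigma>} (\<lambda>\<rho>. Mb * \<phi> \<rho>) = Mb * integral {t..\<sigma>} \<phi>"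
      by (rule integral_mult_right)
    moreover have "\<bar>(c1 - c2) + integral {t..\<sigma>} (\<lambda>\<rho>. b \<rho> (Z1 \<rho>) - b \<rho> (Z2 \<rho>))\<bar> \<le>
       \<bar>c1 - c2\<bar> + \<bar>integral {t..\<sigma>} (\<lambda>\<rho>. b \<rho> (Z1 \<rho>) - b \<rho> (Z2 \<rho>))\<bar>" by (rule abs_triangle_ineq)
    ultimately show "\<phi> \<sigma> \<le> \<bar>c1 - c2\<bar> + Mb * integral {t..\<sigma>} \<phi>"
      unfolding \<phi>_def by linarith
  qed simp
  then show ?thesis unfolding \<phi>_def .
qed

lemma Zlip_y: assumes t: "t \<in> {0..T}" and y: "y \<in> E" "y' \<in> E" and s: "s \<in> {t..T}"
  shows "\<bar>Z t y s - Z t y' s\<bar> \<le> Je * \<bar>y - y'\<bar>"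
proof -
  have 1: "\<bar>Z t y s - Z t y' s\<bar> \<le> \<bar>y - y'\<bar> * exp (Mb * (s - t))"
  proof (rule sol_diff)
    show "continuous_on {t..s} (Z t y)" "continuous_on {t..s} (Z t y')"
      using Zcont[OF t y(1)] Zcont[OF t y(2)] s by (auto intro: continuous_on_subset)
    fix \<sigma> assume \<sigma>: "\<sigma> \<in> {t..s}"
    then have \<sigma>': "\<sigma> \<in> {t..T}" using s by auto
    show "Z t y \<sigma> \<in> E \<and> Z t y' \<sigma> \<in> E" using Zin[OF t y(1) \<sigma>'] Zin[OF t y(2) \<sigma>'] by simp
    show "Z t y \<sigma> = y + integral {t..\<sigma>} (\<lambda>\<rho>. b \<rho> (Z t y \<rho>))" by (rule Zint(2)[OF t y(1) \<sigma>'])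
    show "Z t y' \<sigma> = y' + integral {t..\<sigma>} (\<lambda>\<rho>. b \<rho> (Z t y' \<rho>))" by (rule Zint(2)[OF t y(2) \<sigma>'])
  qed (use t s in auto)
  have "exp (Mb * (s - t)) \<le> Je" using exp_le_Je[of "s - t"] t s by auto
  then have 2: "\<bar>y - y'\<bar> * exp (Mb * (s - t)) \<le> \<bar>y - y'\<bar> * Je" by (rule mult_left_mono) simp
  show ?thesis using 1 2 by (metis (no_types) mult.commute order_trans)
qed

lemma flow: assumes t: "t \<in> {0..T}" and y: "y \<in> E" and \<tau>: "\<tau> \<in> {t..T}" and s: "s \<in> {\<tau>..T}"
  shows "Z \<tau> (Z t y \<tau>) s = Z t y s"
proof -
  define x where "x = Z t y \<tau>"
  have x: "x \<in> E" unfolding x_def using Zin t y \<tau> by auto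
  have \<tau>': "\<tau> \<in> {0..T}" using t \<tau> by auto
  have "\<bar>Z \<tau> x s - Z t y s\<bar> \<le> \<bar>x - x\<bar> * exp (Mb * (s - \<tau>))"
  proof (rule sol_diff)
    show "continuous_on {\<tau>..s} (Z \<tau> x)" using Zcont[OF \<tau>' x] s by (auto intro: continuous_on_subset)
    show "continuous_on {\<tau>..s} (Z t y)" using Zcont[OF t y] s \<tau> by (auto intro: continuous_on_subset)
    fix \<sigma> assume \<sigma>: "\<sigma> \<in> {\<tau>..s}"
    show "Z \<tau> x \<sigma> \<in> E \<and> Z t y \<sigma> \<in> E" using Zin \<sigma> \<tau>' x t y \<tau> s by auto
    show "Z \<tau> x \<sigma> = x + integral {\<tau>..\<sigma>} (\<lambda>\<rho>. b \<rho> (Z \<tau> x \<rho>))" using Zint(2)[OF \<tau>' x] \<sigma> s by auto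
    have int: "(\<lambda>r. b r (Z t y r)) integrable_on {t..\<sigma>}" using Zint(1)[OF t y] \<sigma> s \<tau> by auto
    have "integral {t..\<sigma>} (\<lambda>r. b r (Z t y r)) = integral {t..\<tau>} (\<lambda>r. b r (Z t y r)) + integral {\<tau>..\<sigma>} (\<lambda>r. b r (Z t y r))"
      by (rule int_split) (use \<tau> \<sigma> int in auto)
    then show "Z t y \<sigma> = x + integral {\<tau>..\<sigma>} (\<lambda>\<rho>. b \<rho> (Z t y \<rho>))"
      unfolding x_def using Zint(2)[OF t y, of \<sigma>] Zint(2)[OF t y, of \<tau>] \<sigma> s \<tau> by auto
  qed (use \<tau> s T t in auto)
  then show ?thesis unfolding x_def by simp
qed

end


context setting begin

definition J where "J t y s = exp (integral {t..s} (\<lambda>\<rho>. bz \<rho> (Z t y \<rho>)))"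

lemma bzZ_int: assumes "t \<in> {0..T}" "y \<in> E" "s \<in> {t..T}"
  shows "(\<lambda>\<rho>. bz \<rho> (Z t y \<rho>)) integrable_on {t..s}"
  by (rule integrable_continuous_interval[OF continuous_on_subset[OF bzZcont[OF assms(1,2)]]]) (use assms in auto)

lemma bZ_int: assumes "t \<in> {0..T}" "y \<in> E" "s \<in> {t..T}"
  shows "(\<lambda>\<rho>. b \<rho> (Z t y \<rho>)) integrable_on {t..s}"
  by (rule integrable_continuous_interval[OF continuous_on_subset[OF bZcont[OF assms(1,2)]]]) (use assms in auto)

lemma J_bnd: assumes t: "t \<in> {0..T}" and y: "y \<in> E" and s: "s \<in> {t..T}"
  shows "0 < J t y s" "J t y s \<le> Je"
proof -
  show "0 < J t y s" unfolding J_def by simp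
  have "\<bar>integral {t..s} (\<lambda>\<rho>. bz \<rho> (Z t y \<rho>))\<bar> \<le> Mb * (s - t)"
  proof (rule int_bound)
    show "(\<lambda>\<rho>. bz \<rho> (Z t y \<rho>)) integrable_on {t..s}" by (rule bzZ_int[OF t y s])
    fix x assume "x \<in> {t..s}"
    then have "x \<in> {0..T}" "x \<in> {t..T}" using t s by auto
    then show "\<bar>bz x (Z t y x)\<bar> \<le> Mb" using Mb(2) Zin[OF t y] by blast
  qed (use s in auto)
  then have "integral {t..s} (\<lambda>\<rho>. bz \<rho> (Z t y \<rho>)) \<le> Mb * (s - t)" by simp
  then have "J t y s \<le> exp (Mb * (s - t))" unfolding J_def by simp
  also have "\<dots> \<le> Je" using exp_le_Je[of "s - t"] t s by auto
  finally show "J t y s \<le> Je" .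
qed

lemma Jt: "J t y t = 1"
proof -
  have "integral (cbox t t) (\<lambda>\<rho>. bz \<rho> (Z t y \<rho>)) = 0" by (rule integral_refl)
  then have "integral {t..t} (\<lambda>\<rho>. bz \<rho> (Z t y \<rho>)) = 0" by (simp only: box_real(2))
  then show ?thesis unfolding J_def by simp
qed

lemma J_cont: assumes t: "t \<in> {0..T}" and y: "y \<in> E" shows "continuous_on {t..T} (J t y)"
proof -
  have "continuous_on {t..T} (\<lambda>s. integral {t..s} (\<lambda>\<rho>. bz \<rho> (Z t y \<rho>)))"
    by (rule indefinite_integral_continuous_1[OF bzZ_int[OF t y]]) (use t in auto)
  then show ?thesis unfolding J_def by (intro continuous_intros)
qed

lemma J_eq: assumes t: "t \<in> {0..T}" and y: "y \<in> E" and \<sigma>: "\<sigma> \<in> {t..T}"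
  shows "J t y \<sigma> = 1 + integral {t..\<sigma>} (\<lambda>\<rho>. bz \<rho> (Z t y \<rho>) * J t y \<rho>)"
proof -
  define \<beta> where "\<beta> \<rho> = bz \<rho> (Z t y \<rho>)" for \<rho>
  have c: "continuous_on {t..\<sigma>} \<beta>" unfolding \<beta>_def
    by (rule continuous_on_subset[OF bzZcont[OF t y]]) (use \<sigma> in auto)
  have d: "((J t y) has_real_derivative (\<beta> x * J t y x)) (at x within {t..\<sigma>})" if "x \<in> {t..\<sigma>}" for x
  proof -
    have "((\<lambda>s. integral {t..s} \<beta>) has_real_derivative \<beta> x) (at x within {t..\<sigma>})"
      by (rule integral_has_real_derivative[OF c that])
    then have "((\<lambda>s. exp (integral {t..s} \<beta>)) has_real_derivative exp (integral {t..x} \<beta>) * \<beta> x) (at x within {t..\<sigma>})"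
      by (rule DERIV_chain2[OF DERIV_exp])
    then show ?thesis unfolding J_def \<beta>_def[symmetric] by (simp add: mult.commute)
  qed
  have "((\<lambda>x. \<beta> x * J t y x) has_integral (J t y \<sigma> - J t y t)) {t..\<sigma>}"
    by (rule fundamental_theorem_of_calculus) (use \<sigma> d in \<open>auto simp: has_real_derivative_iff_has_vector_derivative[symmetric]\<close>)
  then have "integral {t..\<sigma>} (\<lambda>x. \<beta> x * J t y x) = J t y \<sigma> - 1" using Jt by (simp add: integral_unique)
  then show ?thesis unfolding \<beta>_def by simp
qed

lemma Z_ud: assumes \<eta>: "\<eta> > 0"
  shows "\<exists>\<delta>>0. \<forall>t\<in>{0..T}. \<forall>y\<in>E. \<forall>y'\<in>E. \<forall>s\<in>{t..T}. \<bar>y' - y\<bar> < \<delta> \<longrightarrow>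
           \<bar>Z t y' s - Z t y s - J t y s * (y' - y)\<bar> \<le> \<eta> * \<bar>y' - y\<bar>"
proof -
  have Je0: "Je > 0" using Je1 by simp
  define \<eta>1 where "\<eta>1 = \<eta> / (Je * Je * (T + 1))"
  have \<eta>1: "\<eta>1 > 0" unfolding \<eta>1_def using \<eta> Je0 T by simp
  obtain \<delta>1 where \<delta>1: "\<delta>1 > 0" "\<forall>s\<in>{0..T}. \<forall>x\<in>E. \<forall>x'\<in>E. \<bar>x' - x\<bar> < \<delta>1 \<longrightarrow>
            \<bar>b s x' - b s x - bz s x * (x' - x)\<bar> \<le> \<eta>1 * \<bar>x' - x\<bar>"
    using b_ud[OF \<eta>1] by blast
  show ?thesis
  proof (intro exI[of _ "\<delta>1 / Je"] conjI ballI impI)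
    show "\<delta>1 / Je > 0" using \<delta>1 Je0 by simp
    fix t y y' s assume t: "t \<in> {0..T}" and y: "y \<in> E" and y': "y' \<in> E" and s: "s \<in> {t..T}"
      and yy: "\<bar>y' - y\<bar> < \<delta>1 / Je"
    define \<Delta> where "\<Delta> \<sigma> = Z t y' \<sigma> - Z t y \<sigma> - J t y \<sigma> * (y' - y)" for \<sigma>
    define f1 where "f1 \<rho> = b \<rho> (Z t y' \<rho>) - b \<rho> (Z t y \<rho>) - bz \<rho> (Z t y \<rho>) * (Z t y' \<rho> - Z t y \<rho>)" for \<rho>
    define f2 where "f2 \<rho> = bz \<rho> (Z t y \<rho>) * \<Delta> \<rho>" for \<rho>
    have cT: "continuous_on {t..T} \<Delta>" unfolding \<Delta>_def
      by (intro continuous_intros Zcont J_cont t y y')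
    have c\<Delta>: "continuous_on {t..s} \<Delta>" by (rule continuous_on_subset[OF cT]) (use s in auto)
    define a where "a = \<eta>1 * Je * \<bar>y' - y\<bar> * T"
    have a0: "0 \<le> a" unfolding a_def using \<eta>1 Je0 T by simp
    have "\<bar>\<Delta> s\<bar> \<le> a * exp (Mb * (s - t))"
    proof (rule gronwall[OF _ _ a0 Mb(1)])
      show "t \<le> s" using s by simp
      show "continuous_on {t..s} (\<lambda>\<sigma>. \<bar>\<Delta> \<sigma>\<bar>)" using c\<Delta> by (intro continuous_intros)
      fix \<sigma> assume \<sigma>: "\<sigma> \<in> {t..s}"
      then have \<sigma>T: "\<sigma> \<in> {t..T}" using s by auto
      have sub: "{t..\<sigma>} \<subseteq> {t..T}" using \<sigma>T by auto
      have ci: "f integrable_on {t..\<sigma>}" if "continuous_on {t..T} f" for f :: "real \<Rightarrow> real"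
        by (rule integrable_continuous_interval[OF continuous_on_subset[OF that sub]])
      have i1: "(\<lambda>\<rho>. b \<rho> (Z t y' \<rho>)) integrable_on {t..\<sigma>}" by (rule ci[OF bZcont[OF t y']])
      have i2: "(\<lambda>\<rho>. b \<rho> (Z t y \<rho>)) integrable_on {t..\<sigma>}" by (rule ci[OF bZcont[OF t y]])
      have i3: "(\<lambda>\<rho>. bz \<rho> (Z t y \<rho>) * J t y \<rho>) integrable_on {t..\<sigma>}"
        by (rule ci) (intro continuous_intros bzZcont J_cont t y)
      have i4: "(\<lambda>\<rho>. \<bar>\<Delta> \<rho>\<bar>) integrable_on {t..\<sigma>}" by (rule ci) (intro continuous_intros cT)
      have eqf: "integral {t..\<sigma>} (\<lambda>\<rho>. f1 \<rho> + f2 \<rho>) = integral {t..\<sigma>} (\<lambda>\<rho>. (b \<rho> (Z t y' \<rho>) - b \<rho> (Z t y \<rho>)) - (y' - y) * (bz \<rho> (Z t y \<rho>) * J t y \<rho>))"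
        by (rule integral_cong) (simp add: f1_def f2_def \<Delta>_def algebra_simps)
      also have "\<dots> = integral {t..\<sigma>} (\<lambda>\<rho>. b \<rho> (Z t y' \<rho>)) - integral {t..\<sigma>} (\<lambda>\<rho>. b \<rho> (Z t y \<rho>))
            - (y' - y) * integral {t..\<sigma>} (\<lambda>\<rho>. bz \<rho> (Z t y \<rho>) * J t y \<rho>)"
        using integral_diff[OF integrable_diff[OF i1 i2] integrable_on_mult_right[OF i3, of "y' - y"]]
          integral_diff[OF i1 i2] integral_mult_right[where c="y' - y"] by simp
      also have "\<dots> = \<Delta> \<sigma>"
        unfolding \<Delta>_def using Zint(2)[OF t y \<sigma>T] Zint(2)[OF t y' \<sigma>T] J_eq[OF t y \<sigma>T]
        by (simp add: algebra_simps)
      finally have \<Delta>eq: "\<Delta> \<sigma> = integral {t..\<sigma>} (\<lambda>\<rho>. f1 \<rho> + f2 \<rho>)" by simp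
      have "norm (integral {t..\<sigma>} (\<lambda>\<rho>. f1 \<rho> + f2 \<rho>)) \<le> integral {t..\<sigma>} (\<lambda>\<rho>. \<eta>1 * Je * \<bar>y' - y\<bar> + Mb * \<bar>\<Delta> \<rho>\<bar>)"
      proof (rule integral_norm_bound_integral)
        show "(\<lambda>\<rho>. f1 \<rho> + f2 \<rho>) integrable_on {t..\<sigma>}"
          by (rule ci) (unfold f1_def f2_def, intro continuous_intros bzZcont bZcont Zcont t y y' cT)
        show "(\<lambda>\<rho>. \<eta>1 * Je * \<bar>y' - y\<bar> + Mb * \<bar>\<Delta> \<rho>\<bar>) integrable_on {t..\<sigma>}"
          by (rule ci) (intro continuous_intros cT)
        fix \<rho> assume \<rho>: "\<rho> \<in> {t..\<sigma>}"
        then have \<rho>T: "\<rho> \<in> {t..T}" "\<rho> \<in> {0..T}" using \<sigma>T t by auto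
        have zz: "\<bar>Z t y' \<rho> - Z t y \<rho>\<bar> \<le> Je * \<bar>y' - y\<bar>" by (rule Zlip_y[OF t y' y \<rho>T(1)])
        have "Je * \<bar>y' - y\<bar> < Je * (\<delta>1 / Je)" by (rule mult_strict_left_mono[OF yy Je0])
        then have zz': "\<bar>Z t y' \<rho> - Z t y \<rho>\<bar> < \<delta>1" using zz Je0 by simp
        have "\<bar>f1 \<rho>\<bar> \<le> \<eta>1 * \<bar>Z t y' \<rho> - Z t y \<rho>\<bar>"
          unfolding f1_def using \<delta>1(2) \<rho>T(2) Zin[OF t y \<rho>T(1)] Zin[OF t y' \<rho>T(1)] zz' by blast
        also have "\<dots> \<le> \<eta>1 * (Je * \<bar>y' - y\<bar>)" by (rule mult_left_mono[OF zz]) (use \<eta>1 in simp)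
        finally have f1b: "\<bar>f1 \<rho>\<bar> \<le> \<eta>1 * Je * \<bar>y' - y\<bar>" by simp
        have "\<bar>f2 \<rho>\<bar> \<le> Mb * \<bar>\<Delta> \<rho>\<bar>" unfolding f2_def abs_mult
          by (rule mult_right_mono) (use Mb(2) \<rho>T(2) Zin[OF t y \<rho>T(1)] in auto)
        then show "norm (f1 \<rho> + f2 \<rho>) \<le> \<eta>1 * Je * \<bar>y' - y\<bar> + Mb * \<bar>\<Delta> \<rho>\<bar>" using f1b by simp
      qed
      also have "\<dots> = \<eta>1 * Je * \<bar>y' - y\<bar> * (\<sigma> - t) + Mb * integral {t..\<sigma>} (\<lambda>\<rho>. \<bar>\<Delta> \<rho>\<bar>)"
        using i4 \<sigma> integral_add[OF integrable_continuous_interval[OF continuous_on_const[of _ "\<eta>1 * Je * \<bar>y' - y\<bar>"]] integrable_on_mult_right[OF i4, of Mb]] integral_mult_right[where c=Mb] by simp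
      also have "\<eta>1 * Je * \<bar>y' - y\<bar> * (\<sigma> - t) \<le> a"
        unfolding a_def using \<eta>1 Je0 \<sigma>T t by (intro mult_left_mono) auto
      finally show "\<bar>\<Delta> \<sigma>\<bar> \<le> a + Mb * integral {t..\<sigma>} (\<lambda>\<rho>. \<bar>\<Delta> \<rho>\<bar>)" using \<Delta>eq by simp
    qed
    also have "\<dots> \<le> a * Je" using exp_le_Je[of "s - t"] s t a0 by (intro mult_left_mono) auto
    also have "\<dots> = (\<eta>1 * (Je * Je)) * (T * \<bar>y' - y\<bar>)" unfolding a_def by (simp add: algebra_simps)
    also have "\<dots> \<le> (\<eta>1 * (Je * Je)) * ((T + 1) * \<bar>y' - y\<bar>)"
      by (rule mult_left_mono) (use \<eta>1 Je0 in \<open>auto simp: algebra_simps\<close>)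
    also have "\<dots> = (\<eta>1 * (Je * Je * (T + 1))) * \<bar>y' - y\<bar>" by (simp add: algebra_simps)
    also have "\<eta>1 * (Je * Je * (T + 1)) = \<eta>" unfolding \<eta>1_def using Je0 T by simp
    finally show "\<bar>Z t y' s - Z t y s - J t y s * (y' - y)\<bar> \<le> \<eta> * \<bar>y' - y\<bar>" unfolding \<Delta>_def .
  qed
qed

end


lemma dist3:
  fixes t y s t' y' s' :: real
  shows "\<bar>t - t'\<bar> \<le> dist (t,y,s) (t',y',s')" "\<bar>y - y'\<bar> \<le> dist (t,y,s) (t',y',s')"
    "\<bar>s - s'\<bar> \<le> dist (t,y,s) (t',y',s')"
proof -
  show "\<bar>t - t'\<bar> \<le> dist (t,y,s) (t',y',s')" using dist_fst_le[of "(t,y,s)" "(t',y',s')"] by (simp add: dist_real_def)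
  have "dist (y,s) (y',s') \<le> dist (t,y,s) (t',y',s')" using dist_snd_le[of "(t,y,s)" "(t',y',s')"] by simp
  moreover have "\<bar>y - y'\<bar> \<le> dist (y,s) (y',s')" using dist_fst_le[of "(y,s)" "(y',s')"] by (simp add: dist_real_def)
  moreover have "\<bar>s - s'\<bar> \<le> dist (y,s) (y',s')" using dist_snd_le[of "(y,s)" "(y',s')"] by (simp add: dist_real_def)
  ultimately show "\<bar>y - y'\<bar> \<le> dist (t,y,s) (t',y',s')" "\<bar>s - s'\<bar> \<le> dist (t,y,s) (t',y',s')" by linarith+
qed

context setting begin

definition "Zx t y s = Z t y (max t s)"
definition "Jx t y s = J t y (max t s)"
abbreviation "D3 \<equiv> {0..T} \<times> E \<times> {0..T}"

lemma Zx_in: "t \<in> {0..T} \<Longrightarrow> y \<in> E \<Longrightarrow> s \<in> {0..T} \<Longrightarrow> Zx t y s \<in> E"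
  unfolding Zx_def by (rule Zin) auto

lemma Zx_in2: "t \<in> {0..T} \<Longrightarrow> y \<in> E \<Longrightarrow> s \<in> {0..T} \<Longrightarrow> l \<le> Zx t y s"
  "t \<in> {0..T} \<Longrightarrow> y \<in> E \<Longrightarrow> s \<in> {0..T} \<Longrightarrow> Zx t y s \<le> r"
  using Zx_in by auto

lemma Zx_eq: "s \<in> {t..T} \<Longrightarrow> Zx t y s = Z t y s" unfolding Zx_def by (simp add: max_def)
lemma Jx_eq: "s \<in> {t..T} \<Longrightarrow> Jx t y s = J t y s" unfolding Jx_def by (simp add: max_def)

lemma Zx_t_le: assumes t: "t \<in> {0..T}" "t' \<in> {0..T}" "t \<le> t'" and y: "y \<in> E" and s: "s \<in> {0..T}"
  shows "\<bar>Zx t y s - Zx t' y s\<bar> \<le> Je * B * (t' - t)"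
proof -
  have "B * (t' - t) \<le> Je * (B * (t' - t))"
    using mult_right_mono[OF Je1, of "B * (t' - t)"] B(1) t by simp
  then have JB: "B * (t' - t) \<le> Je * B * (t' - t)" by (simp add: mult.assoc)
  show ?thesis
  proof (cases "s \<le> t")
    case True
    then have m: "max t s = t" "max t' s = t'" using t by auto
    have "Zx t y s = y" unfolding Zx_def m using t y Zt by auto
    moreover have "Zx t' y s = y" unfolding Zx_def m using t y Zt by auto
    ultimately show ?thesis using Je1 B(1) t by simp
  next
    case False
    show ?thesis
    proof (cases "s \<le> t'")
      case True
      have "Zx t y s = Z t y s" using False t s by (simp add: Zx_def max_def)
      moreover have "Zx t' y s = Z t y t" using True t y Zt by (simp add: Zx_def max_def)
      moreover have "\<bar>Z t y s - Z t y t\<bar> \<le> B * \<bar>s - t\<bar>" by (rule Zlip_s) (use t s y False in auto)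
      moreover have "B * \<bar>s - t\<bar> \<le> B * (t' - t)" using False True B(1) by (intro mult_left_mono) auto
      ultimately show ?thesis using JB by linarith
    next
      case False2: False
      have "Zx t y s = Z t' (Z t y t') s" using flow[of t y t' s] t y s False2 by (simp add: Zx_def max_def)
      moreover have "Zx t' y s = Z t' y s" using False2 by (simp add: Zx_def max_def)
      moreover have "\<bar>Z t' (Z t y t') s - Z t' y s\<bar> \<le> Je * \<bar>Z t y t' - y\<bar>"
        by (rule Zlip_y) (use t y s False2 Zin in auto)
      moreover have "\<bar>Z t y t' - Z t y t\<bar> \<le> B * \<bar>t' - t\<bar>" by (rule Zlip_s) (use t y in auto)
      moreover have "Z t y t = y" using Zt t y by auto
      ultimately have "\<bar>Zx t y s - Zx t' y s\<bar> \<le> Je * (B * \<bar>t' - t\<bar>)"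
        using Je1 by (smt (verit) mult_left_mono)
      then show ?thesis using t by (simp add: mult.assoc)
    qed
  qed
qed

lemma Zx_lip: assumes t: "t \<in> {0..T}" "t' \<in> {0..T}" and y: "y \<in> E" "y' \<in> E" and s: "s \<in> {0..T}" "s' \<in> {0..T}"
  shows "\<bar>Zx t y s - Zx t' y' s'\<bar> \<le> B * \<bar>s - s'\<bar> + Je * \<bar>y - y'\<bar> + Je * B * \<bar>t - t'\<bar>"
proof -
  have 1: "\<bar>Zx t y s - Zx t y s'\<bar> \<le> B * \<bar>s - s'\<bar>"
  proof -
    have "\<bar>Zx t y s - Zx t y s'\<bar> \<le> B * \<bar>max t s - max t s'\<bar>" unfolding Zx_def
      by (rule Zlip_s) (use t y s in auto)
    also have "\<dots> \<le> B * \<bar>s - s'\<bar>" using B(1) by (intro mult_left_mono) (auto simp: max_def)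
    finally show ?thesis .
  qed
  have 2: "\<bar>Zx t y s' - Zx t y' s'\<bar> \<le> Je * \<bar>y - y'\<bar>" unfolding Zx_def
    by (rule Zlip_y) (use t y s in auto)
  have 3: "\<bar>Zx t y' s' - Zx t' y' s'\<bar> \<le> Je * B * \<bar>t - t'\<bar>"
  proof (cases "t \<le> t'")
    case True then show ?thesis using Zx_t_le[of t t' y' s'] t y s by simp
  next
    case False then have "\<bar>Zx t' y' s' - Zx t y' s'\<bar> \<le> Je * B * (t - t')" using Zx_t_le[of t' t y' s'] t y s by simp
    then show ?thesis using False by (simp add: abs_minus_commute)
  qed
  show ?thesis using 1 2 3 by linarith
qed

lemma Zx_cont: "continuous_on D3 (\<lambda>(t,y,s). Zx t y s)"
proof (rule lipschitz_on_continuous_on)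
  show "(B + Je + Je * B)-lipschitz_on D3 (\<lambda>(t,y,s). Zx t y s)"
  proof (rule lipschitz_onI)
    fix p q assume p: "p \<in> D3" and q: "q \<in> D3"
    obtain t y s where pp: "p = (t,y,s)" by (cases p) auto
    obtain t' y' s' where qq: "q = (t',y',s')" by (cases q) auto
    have h: "t \<in> {0..T}" "t' \<in> {0..T}" "y \<in> E" "y' \<in> E" "s \<in> {0..T}" "s' \<in> {0..T}" using p q pp qq by auto
    have "\<bar>Zx t y s - Zx t' y' s'\<bar> \<le> B * \<bar>s - s'\<bar> + Je * \<bar>y - y'\<bar> + Je * B * \<bar>t - t'\<bar>"
      using Zx_lip[OF h] .
    also have "\<dots> \<le> B * dist p q + Je * dist p q + Je * B * dist p q"
      unfolding pp qq using dist3[where t=t and y=y and s=s and t'=t' and y'=y' and s'=s'] B(1) Je1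
      by (intro add_mono mult_left_mono) auto
    finally show "dist ((\<lambda>(t,y,s). Zx t y s) p) ((\<lambda>(t,y,s). Zx t y s) q) \<le> (B + Je + Je * B) * dist p q"
      unfolding pp qq by (simp add: dist_real_def algebra_simps)
  next
    show "0 \<le> B + Je + Je * B" using B(1) Je1 by simp
  qed
qed

lemma Jx_cont: "continuous_on D3 (\<lambda>(t,y,s). Jx t y s)"
proof -
  define F where "F p \<rho> = bz \<rho> (Zx (fst p) (fst (snd p)) \<rho>)" for p :: "real \<times> real \<times> real" and \<rho>
  have cD: "compact D3" by (simp add: compact_Times)
  have cZ: "continuous_on (D3 \<times> {0..T}) (\<lambda>(p,\<rho>). Zx (fst p) (fst (snd p)) \<rho>)"
  proof -
    have "continuous_on (D3 \<times> {0..T}) (\<lambda>x. (\<lambda>(t,y,s). Zx t y s) ((\<lambda>(p,\<rho>). (fst p, fst (snd p), \<rho>)) x))"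
      by (rule continuous_on_compose2[OF Zx_cont]) (auto intro!: continuous_intros simp: case_prod_beta)
    then show ?thesis by (simp add: case_prod_beta)
  qed
  have cF: "continuous_on (D3 \<times> {0..T}) (\<lambda>(p,\<rho>). F p \<rho>)"
  proof -
    have "continuous_on (D3 \<times> {0..T}) (\<lambda>x. (\<lambda>(a,b). bz a b) ((\<lambda>(p,\<rho>). (\<rho>, Zx (fst p) (fst (snd p)) \<rho>)) x))"
      by (rule continuous_on_compose2[OF b1_cont])
         (auto intro!: continuous_intros cZ[unfolded case_prod_beta] Zx_in2 simp: case_prod_beta)
    then show ?thesis unfolding F_def by (simp add: case_prod_beta)
  qed
  have IG: "continuous_on (D3 \<times> {0..T}) (\<lambda>(p,x). integral {0..x} (F p))"
    by (rule param_int_cont[OF cD cF]) (use T in simp)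
  have Fi: "F p integrable_on {0..x}" if "p \<in> D3" "x \<in> {0..T}" for p x
  proof -
    have "continuous_on {0..T} (\<lambda>\<rho>. (\<lambda>(p,\<rho>). F p \<rho>) ((\<lambda>\<rho>. (p, \<rho>)) \<rho>))"
      by (rule continuous_on_compose2[OF cF]) (use that in \<open>auto intro!: continuous_intros\<close>)
    then have "continuous_on {0..T} (F p)" by simp
    then have "continuous_on {0..x} (F p)" by (rule continuous_on_subset) (use that in auto)
    then show ?thesis by (rule integrable_continuous_interval)
  qed
  have eq: "Jx t y s = exp (integral {0..max t s} (F (t,y,s)) - integral {0..t} (F (t,y,s)))"
    if "(t,y,s) \<in> D3" for t y s
  proof -
    have "integral {t..max t s} (\<lambda>\<rho>. bz \<rho> (Z t y \<rho>)) = integral {t..max t s} (F (t,y,s))"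
      by (rule integral_cong) (simp add: F_def Zx_def max_def)
    moreover have "integral {0..max t s} (F (t,y,s)) = integral {0..t} (F (t,y,s)) + integral {t..max t s} (F (t,y,s))"
      by (rule int_split) (use that Fi[of "(t,y,s)" "max t s"] in \<open>auto simp: max_def\<close>)
    ultimately show ?thesis unfolding Jx_def J_def by simp
  qed
  have c1: "continuous_on D3 (\<lambda>p. (\<lambda>(p,x). integral {0..x} (F p)) ((\<lambda>p. (p, max (fst p) (snd (snd p)))) p))"
    by (rule continuous_on_compose2[OF IG]) (auto intro!: continuous_intros)
  have c2: "continuous_on D3 (\<lambda>p. (\<lambda>(p,x). integral {0..x} (F p)) ((\<lambda>p. (p, fst p)) p))"
    by (rule continuous_on_compose2[OF IG]) (auto intro!: continuous_intros)
  have "continuous_on D3 (\<lambda>p. exp (integral {0..max (fst p) (snd (snd p))} (F p) - integral {0..fst p} (F p)))"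
    using c1 c2 by (intro continuous_intros) simp_all
  then show ?thesis
    by (rule continuous_on_eq) (use eq in auto)
qed

end


lemma deriv_from_ud:
  fixes f :: "real \<Rightarrow> real"
  assumes "\<And>\<eta>. \<eta> > 0 \<Longrightarrow> \<exists>\<delta>>0. \<forall>y'\<in>S. \<bar>y' - y\<bar> < \<delta> \<longrightarrow> \<bar>f y' - f y - D * (y' - y)\<bar> \<le> \<eta> * \<bar>y' - y\<bar>"
  shows "(f has_real_derivative D) (at y within S)"
  unfolding has_field_derivative_iff tendsto_iff
proof (intro allI impI)
  fix e :: real assume e: "e > 0"
  obtain \<delta> where \<delta>: "\<delta> > 0" "\<forall>y'\<in>S. \<bar>y' - y\<bar> < \<delta> \<longrightarrow> \<bar>f y' - f y - D * (y' - y)\<bar> \<le> (e/2) * \<bar>y' - y\<bar>"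
    using assms[of "e/2"] e by auto
  show "\<forall>\<^sub>F x in at y within S. dist ((f x - f y) / (x - y)) D < e"
    unfolding eventually_at
  proof (intro exI[of _ \<delta>] conjI ballI impI \<delta>(1))
    fix x assume x: "x \<in> S" and h: "x \<noteq> y \<and> dist x y < \<delta>"
    then have nz: "\<bar>x - y\<bar> > 0" by simp
    have "\<bar>f x - f y - D * (x - y)\<bar> \<le> (e/2) * \<bar>x - y\<bar>" using \<delta>(2) x h by (auto simp: dist_real_def)
    moreover have "(f x - f y) / (x - y) - D = (f x - f y - D * (x - y)) / (x - y)" using nz by (simp add: field_simps)
    ultimately have "\<bar>(f x - f y) / (x - y) - D\<bar> \<le> e/2" using nz by (simp add: abs_divide divide_le_eq)
    then show "dist ((f x - f y) / (x - y)) D < e" using e by (simp add: dist_real_def)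
  qed
qed

lemma uc_single:
  fixes f :: "real \<Rightarrow> real"
  assumes "compact S" "continuous_on S f" "e > 0"
  shows "\<exists>d>0. \<forall>x\<in>S. \<forall>x'\<in>S. \<bar>x - x'\<bar> < d \<longrightarrow> \<bar>f x - f x'\<bar> < e"
  using compact_uniformly_continuous[OF assms(2,1)] assms(3) unfolding uniformly_continuous_on_def dist_real_def
  by metis

lemma uc_to_cont:
  fixes f :: "real \<times> real \<Rightarrow> real"
  assumes "\<And>\<eta>. \<eta> > 0 \<Longrightarrow> \<exists>\<delta>>0. \<forall>a b a' b'. (a,b)\<in>S \<longrightarrow> (a',b')\<in>S \<longrightarrow> \<bar>a-a'\<bar> < \<delta> \<longrightarrow> \<bar>b-b'\<bar> < \<delta>
            \<longrightarrow> \<bar>f (a,b) - f (a',b')\<bar> < \<eta>"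
  shows "continuous_on S f"
  unfolding continuous_on_iff
proof (intro ballI allI impI)
  fix p e assume p: "p \<in> S" and e: "(0::real) < e"
  obtain \<delta> where \<delta>: "\<delta> > 0" "\<forall>a b a' b'. (a,b)\<in>S \<longrightarrow> (a',b')\<in>S \<longrightarrow> \<bar>a-a'\<bar> < \<delta> \<longrightarrow> \<bar>b-b'\<bar> < \<delta>
            \<longrightarrow> \<bar>f (a,b) - f (a',b')\<bar> < e" using assms e by blast
  show "\<exists>d>0. \<forall>x'\<in>S. dist x' p < d \<longrightarrow> dist (f x') (f p) < e"
  proof (intro exI[of _ \<delta>] conjI ballI impI \<delta>(1))
    fix q assume q: "q \<in> S" "dist q p < \<delta>"
    obtain a b where pp: "p = (a,b)" by force
    obtain a' b' where qq: "q = (a',b')" by force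
    have "\<bar>a' - a\<bar> < \<delta>" "\<bar>b' - b\<bar> < \<delta>"
      using dist_fst_le[of q p] dist_snd_le[of q p] q(2) unfolding pp qq by (auto simp: dist_real_def)
    then show "dist (f q) (f p) < e" using \<delta>(2) p q unfolding pp qq dist_real_def by blast
  qed
qed

lemma supE_le: "E \<noteq> {} \<Longrightarrow> (\<And>z. z \<in> E \<Longrightarrow> \<bar>v z\<bar> \<le> R) \<Longrightarrow> supE E v \<le> R"
  unfolding supE_def by (rule cSUP_least) auto

lemma supE_ge: assumes "compact E" "continuous_on E v" "z \<in> E" shows "\<bar>v z\<bar> \<le> supE E v"
proof -
  have "compact ((\<lambda>z. \<bar>v z\<bar>) ` E)" by (rule compact_continuous_image) (intro continuous_intros assms)+
  then have "bdd_above ((\<lambda>z. \<bar>v z\<bar>) ` E)" by (meson bounded_imp_bdd_above compact_imp_bounded)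
  then show ?thesis unfolding supE_def using assms(3) by (rule cSUP_upper2) simp
qed

lemma supE_zero: "E \<noteq> {} \<Longrightarrow> supE E (\<lambda>z. 0) = 0"
  unfolding supE_def by simp

context setting begin

definition "L1 = max L' 0"
definition "K1 = max K 0"
definition "Cc = Je * L1 + 1"
definition "Aa = H1 * Je + Je * K1 * T"
definition "Rs = Aa * exp (Cc * T) + 1"
definition "Gb = L1 * Rs + K1"

definition nice :: "(real \<Rightarrow> real \<Rightarrow> real) \<Rightarrow> bool" where
  "nice d \<longleftrightarrow> continuous_on ({0..T} \<times> E) (\<lambda>(s,x). d s x) \<and>
     (\<forall>s\<in>{0..T}. \<forall>x\<in>E. \<bar>d s x\<bar> \<le> Aa * exp (Cc * (T - s)))"

lemma H1_0: "0 \<le> H1" using H1[of l] lr by auto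
lemma L1_0: "0 \<le> L1" unfolding L1_def by simp
lemma K1_0: "0 \<le> K1" unfolding K1_def by simp
lemma Cc_pos: "0 < Cc"
proof -
  have "0 \<le> Je * L1" using L1_0 Je1 by simp
  then show ?thesis unfolding Cc_def by linarith
qed
lemma Aa_0: "0 \<le> Aa" unfolding Aa_def using H1_0 K1_0 Je1 T by simp
lemma Rs_pos: "0 < Rs"
proof -
  have "0 \<le> Aa * exp (Cc * T)" using Aa_0 by simp
  then show ?thesis unfolding Rs_def by linarith
qed
lemma Gb_0: "0 \<le> Gb" unfolding Gb_def using L1_0 K1_0 Rs_pos by simp
lemma E_ne: "E \<noteq> {}" using lr by simp

lemma AaR: assumes "s \<in> {0..T}" shows "Aa * exp (Cc * (T - s)) \<le> Rs - 1"
proof -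
  have "exp (Cc * (T - s)) \<le> exp (Cc * T)" using Cc_pos assms by (simp add: mult_left_mono)
  then have "Aa * exp (Cc * (T - s)) \<le> Aa * exp (Cc * T)" by (rule mult_left_mono) (rule Aa_0)
  then show ?thesis unfolding Rs_def by simp
qed

lemma cont_slice:
  assumes "continuous_on ({0..T} \<times> E) (\<lambda>(s,x). d s x)" "s \<in> {0..T}"
  shows "continuous_on E (d s)"
proof -
  have "continuous_on E (\<lambda>x. (\<lambda>(s,x). d s x) ((\<lambda>x. (s,x)) x))"
    by (rule continuous_on_compose2[OF assms(1)]) (use assms(2) in \<open>auto intro!: continuous_intros\<close>)
  then show ?thesis by simp
qed

lemma nice_Cb: "nice d \<Longrightarrow> s \<in> {0..T} \<Longrightarrow> d s \<in> Cb E"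
  unfolding Cb_def nice_def using cont_slice by auto

lemma nice_sup: assumes "nice d" "s \<in> {0..T}" shows "supE E (d s) \<le> Aa * exp (Cc * (T - s))"
  by (rule supE_le[OF E_ne]) (use assms in \<open>auto simp: nice_def\<close>)

lemma nice_bnd: assumes "nice d" "s \<in> {0..T}" "x \<in> E" shows "\<bar>d s x\<bar> \<le> Rs - 1"
  using assms AaR[of s] unfolding nice_def by force

lemma ghat_cont_slice: "s \<in> {0..T} \<Longrightarrow> v \<in> Cb E \<Longrightarrow> continuous_on E (ghat s v)"
  using ghat_Cb unfolding Cb_def by blast

lemma gh_bnd: assumes d: "nice d" and s: "s \<in> {0..T}" and x: "x \<in> E"
  shows "\<bar>ghat s (d s) x\<bar> \<le> L1 * (Aa * exp (Cc * (T - s))) + K1" "\<bar>ghat s (d s) x\<bar> \<le> Gb"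
proof -
  have dC: "d s \<in> Cb E" by (rule nice_Cb[OF d s])
  have "\<bar>ghat s (d s) x\<bar> \<le> supE E (ghat s (d s))"
    by (rule supE_ge) (use ghat_cont_slice[OF s dC] x in auto)
  also have "\<dots> \<le> L' * supE E (d s) + K" using ghat_bound s dC by blast
  also have "\<dots> \<le> L1 * supE E (d s) + K1"
  proof -
    have "0 \<le> supE E (d s)" using supE_ge[of E "d s" l] cont_slice d s lr unfolding nice_def by force
    then have "L' * supE E (d s) \<le> L1 * supE E (d s)" unfolding L1_def by (intro mult_right_mono) auto
    then show ?thesis unfolding K1_def by linarith
  qed
  also have "\<dots> \<le> L1 * (Aa * exp (Cc * (T - s))) + K1"
    using nice_sup[OF d s] L1_0 by (simp add: mult_left_mono)
  finally show 1: "\<bar>ghat s (d s) x\<bar> \<le> L1 * (Aa * exp (Cc * (T - s))) + K1" .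
  have "L1 * (Aa * exp (Cc * (T - s))) \<le> L1 * Rs" using AaR[OF s] L1_0 by (intro mult_left_mono) auto
  then show "\<bar>ghat s (d s) x\<bar> \<le> Gb" using 1 unfolding Gb_def by linarith
qed

lemma gh_mod: assumes \<eta>: "\<eta> > 0"
  shows "\<exists>\<delta>>0. \<forall>d. nice d \<longrightarrow> (\<forall>s\<in>{0..T}. \<forall>x\<in>E. \<forall>x'\<in>E. \<bar>x - x'\<bar> < \<delta> \<longrightarrow>
            \<bar>ghat s (d s) x - ghat s (d s) x'\<bar> < \<eta>)"
proof -
  obtain \<delta> where \<delta>: "\<delta> > 0" "\<forall>t\<in>{0..T}. \<forall>t'\<in>{0..T}. \<forall>v\<in>Cb E. \<forall>v'\<in>Cb E. \<forall>z\<in>E. \<forall>z'\<in>E.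
               supE E v \<le> Rs \<and> supE E v' \<le> Rs \<and>
               \<bar>t - t'\<bar> < \<delta> \<and> supE E (\<lambda>y. v y - v' y) < \<delta> \<and> \<bar>z - z'\<bar> < \<delta> \<longrightarrow>
               \<bar>ghat t v z - ghat t' v' z'\<bar> < \<eta>"
    using ghat_unif[rule_format, OF Rs_pos \<eta>] by (elim exE conjE) (rule that; assumption)
  show ?thesis
  proof (intro exI[of _ \<delta>] conjI allI impI ballI \<delta>(1))
    fix d s x x' assume d: "nice d" and s: "s \<in> {0..T}" and x: "x \<in> E" "x' \<in> E" and xx: "\<bar>x - x'\<bar> < \<delta>"
    have sR: "supE E (d s) \<le> Rs" using nice_sup[OF d s] AaR[OF s] by linarith
    have "supE E (\<lambda>y. d s y - d s y) = 0" using supE_zero[OF E_ne] by simp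
    then have pre: "supE E (d s) \<le> Rs \<and> supE E (d s) \<le> Rs \<and> \<bar>s - s\<bar> < \<delta> \<and> supE E (\<lambda>y. d s y - d s y) < \<delta> \<and> \<bar>x - x'\<bar> < \<delta>"
      using sR \<delta>(1) xx by simp
    show "\<bar>ghat s (d s) x - ghat s (d s) x'\<bar> < \<eta>"
      using \<delta>(2)[rule_format, OF s s nice_Cb[OF d s] nice_Cb[OF d s] x(1) x(2) pre] .
  qed
qed

lemma gh_uc: assumes d: "nice d" and \<eta>: "\<eta> > 0"
  shows "\<exists>\<delta>>0. \<forall>s x s' x'. (s,x) \<in> {0..T} \<times> E \<longrightarrow> (s',x') \<in> {0..T} \<times> E \<longrightarrow> \<bar>s - s'\<bar> < \<delta> \<longrightarrow> \<bar>x - x'\<bar> < \<delta> \<longrightarrow>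
            \<bar>(\<lambda>(s,x). ghat s (d s) x) (s,x) - (\<lambda>(s,x). ghat s (d s) x) (s',x')\<bar> < \<eta>"
proof -
  obtain \<delta> where \<delta>: "\<delta> > 0" "\<forall>t\<in>{0..T}. \<forall>t'\<in>{0..T}. \<forall>v\<in>Cb E. \<forall>v'\<in>Cb E. \<forall>z\<in>E. \<forall>z'\<in>E.
               supE E v \<le> Rs \<and> supE E v' \<le> Rs \<and>
               \<bar>t - t'\<bar> < \<delta> \<and> supE E (\<lambda>y. v y - v' y) < \<delta> \<and> \<bar>z - z'\<bar> < \<delta> \<longrightarrow>
               \<bar>ghat t v z - ghat t' v' z'\<bar> < \<eta>"
    using ghat_unif[rule_format, OF Rs_pos \<eta>] by (elim exE conjE) (rule that; assumption)
  have dc: "continuous_on ({0..T} \<times> E) (\<lambda>(s,x). d s x)" using d unfolding nice_def by simp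
  obtain \<delta>2 where \<delta>2: "\<delta>2 > 0" "\<forall>a b a' b'. (a,b)\<in>{0..T} \<times> E \<longrightarrow> (a',b')\<in>{0..T} \<times> E \<longrightarrow> \<bar>a-a'\<bar> < \<delta>2 \<longrightarrow> \<bar>b-b'\<bar> < \<delta>2
            \<longrightarrow> \<bar>(\<lambda>(s,x). d s x) (a,b) - (\<lambda>(s,x). d s x) (a',b')\<bar> < \<delta>/2"
    using uc_pair[OF _ dc, of "\<delta>/2"] \<delta>(1) by (auto simp: compact_Times)
  show ?thesis
  proof (intro exI[of _ "min \<delta> \<delta>2"] conjI allI impI)
    show "min \<delta> \<delta>2 > 0" using \<delta>(1) \<delta>2(1) by simp
    fix s x s' x' assume h: "(s,x) \<in> {0..T} \<times> E" "(s',x') \<in> {0..T} \<times> E" "\<bar>s - s'\<bar> < min \<delta> \<delta>2" "\<bar>x - x'\<bar> < min \<delta> \<delta>2"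
    have s: "s \<in> {0..T}" "s' \<in> {0..T}" using h by auto
    have "supE E (\<lambda>y. d s y - d s' y) \<le> \<delta>/2"
    proof (rule supE_le[OF E_ne])
      fix z assume z: "z \<in> E"
      have m: "(s,z) \<in> {0..T} \<times> E" "(s',z) \<in> {0..T} \<times> E" "\<bar>s - s'\<bar> < \<delta>2" "\<bar>z - z\<bar> < \<delta>2"
        using h z \<delta>2(1) by auto
      have "\<bar>(\<lambda>(s,x). d s x) (s,z) - (\<lambda>(s,x). d s x) (s',z)\<bar> < \<delta>/2"
        using \<delta>2(2)[rule_format, OF m] .
      then show "\<bar>d s z - d s' z\<bar> \<le> \<delta>/2" by simp
    qed
    then have "supE E (\<lambda>y. d s y - d s' y) < \<delta>" using \<delta>(1) by simp
    moreover have "supE E (d s) \<le> Rs" using nice_sup[OF d s(1)] AaR[OF s(1)] by linarith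
    moreover have "supE E (d s') \<le> Rs" using nice_sup[OF d s(2)] AaR[OF s(2)] by linarith
    ultimately have pre: "supE E (d s) \<le> Rs \<and> supE E (d s') \<le> Rs \<and> \<bar>s - s'\<bar> < \<delta> \<and> supE E (\<lambda>y. d s y - d s' y) < \<delta> \<and> \<bar>x - x'\<bar> < \<delta>"
      using h by simp
    have xx: "x \<in> E" "x' \<in> E" using h by auto
    have "\<bar>ghat s (d s) x - ghat s' (d s') x'\<bar> < \<eta>"
      using \<delta>(2)[rule_format, OF s(1) s(2) nice_Cb[OF d s(1)] nice_Cb[OF d s(2)] xx pre] .
    then show "\<bar>(\<lambda>(s,x). ghat s (d s) x) (s,x) - (\<lambda>(s,x). ghat s (d s) x) (s',x')\<bar> < \<eta>" by simp
  qed
qed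

lemma gh_cont: "nice d \<Longrightarrow> continuous_on ({0..T} \<times> E) (\<lambda>(s,x). ghat s (d s) x)"
  by (rule uc_to_cont) (rule gh_uc)

definition "Q d s x = integral {l..x} (ghat s (d s))"

lemma Q_cont: assumes "nice d" shows "continuous_on ({0..T} \<times> E) (\<lambda>(s,x). Q d s x)"
  unfolding Q_def using param_int_cont[of "{0..T}" l r "\<lambda>s \<xi>. ghat s (d s) \<xi>"] gh_cont[OF assms] lr
  by (simp add: compact_Icc)

lemma Q_deriv: assumes "nice d" "s \<in> {0..T}" "x \<in> E"
  shows "(Q d s has_real_derivative ghat s (d s) x) (at x within E)"
  unfolding Q_def by (rule integral_has_real_derivative[OF ghat_cont_slice[OF assms(2) nice_Cb[OF assms(1,2)]] assms(3)])

end


lemma prod_diff_bnd: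
  fixes a a' J J' :: real
  assumes "0 \<le> J" "J \<le> Jm" "\<bar>a - a'\<bar> \<le> ea" "\<bar>a'\<bar> \<le> A" "\<bar>J - J'\<bar> \<le> eJ"
  shows "\<bar>a * J - a' * J'\<bar> \<le> ea * Jm + A * eJ"
proof -
  have "a * J - a' * J' = (a - a') * J + a' * (J - J')" by (simp add: algebra_simps)
  then have "\<bar>a * J - a' * J'\<bar> \<le> \<bar>a - a'\<bar> * J + \<bar>a'\<bar> * \<bar>J - J'\<bar>"
    using assms(1) by (simp add: abs_mult abs_triangle_ineq[THEN order_trans])
  also have "\<dots> \<le> ea * Jm + A * eJ"
  proof (rule add_mono)
    show "\<bar>a - a'\<bar> * J \<le> ea * Jm" using assms by (meson abs_ge_zero mult_mono order_trans)
    show "\<bar>a'\<bar> * \<bar>J - J'\<bar> \<le> A * eJ" using assms by (meson abs_ge_zero mult_mono order_trans)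
  qed
  finally show ?thesis .
qed

lemma ud_comp:
  fixes F F' :: "real \<Rightarrow> real"
  shows "\<bar>F z' - F z - F' z * J * dy\<bar> \<le> \<bar>F z' - F z - F' z * (z' - z)\<bar> + \<bar>F' z\<bar> * \<bar>z' - z - J * dy\<bar>"
proof -
  have "F z' - F z - F' z * J * dy = (F z' - F z - F' z * (z' - z)) + F' z * (z' - z - J * dy)"
    by (simp add: algebra_simps)
  then have "\<bar>F z' - F z - F' z * J * dy\<bar> = \<bar>(F z' - F z - F' z * (z' - z)) + F' z * (z' - z - J * dy)\<bar>" by simp
  also have "\<dots> \<le> \<bar>F z' - F z - F' z * (z' - z)\<bar> + \<bar>F' z * (z' - z - J * dy)\<bar>" by (rule abs_triangle_ineq)
  finally show ?thesis by (simp add: abs_mult)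
qed

context setting begin

definition "Phi d t y = h' (Z t y T) * J t y T + integral {t..T} (\<lambda>s. ghat s (d s) (Z t y s) * J t y s)"
definition "Psi d t y = h (Z t y T) - h (Z t l T) + integral {t..T} (\<lambda>s. Q d s (Z t y s) - Q d s (Z t l s))"

lemma h'_cont: "continuous_on E h'" using hd unfolding C1b_deriv_def by simp
lemma h_deriv: "x \<in> E \<Longrightarrow> (h has_real_derivative h' x) (at x within E)" using hd unfolding C1b_deriv_def by simp

lemma ZxC2: "continuous_on (({0..T} \<times> E) \<times> {0..T}) (\<lambda>(p,s). Zx (fst p) (snd p) s)"
proof -
  have "continuous_on (({0..T} \<times> E) \<times> {0..T}) (\<lambda>x. (\<lambda>(t,y,s). Zx t y s) ((\<lambda>(p,s). (fst p, snd p, s)) x))"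
    by (rule continuous_on_compose2[OF Zx_cont]) (auto intro!: continuous_intros simp: case_prod_beta)
  then show ?thesis by (simp add: case_prod_beta)
qed

lemma JxC2: "continuous_on (({0..T} \<times> E) \<times> {0..T}) (\<lambda>(p,s). Jx (fst p) (snd p) s)"
proof -
  have "continuous_on (({0..T} \<times> E) \<times> {0..T}) (\<lambda>x. (\<lambda>(t,y,s). Jx t y s) ((\<lambda>(p,s). (fst p, snd p, s)) x))"
    by (rule continuous_on_compose2[OF Jx_cont]) (auto intro!: continuous_intros simp: case_prod_beta)
  then show ?thesis by (simp add: case_prod_beta)
qed

lemma comp2_cont:
  fixes F :: "real \<Rightarrow> real \<Rightarrow> real"
  assumes "continuous_on ({0..T} \<times> E) (\<lambda>(s,x). F s x)"
  shows "continuous_on (({0..T} \<times> E) \<times> {0..T}) (\<lambda>(p,s). F s (Zx (fst p) (snd p) s))"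
proof -
  have "continuous_on (({0..T} \<times> E) \<times> {0..T}) (\<lambda>x. (\<lambda>(s,x). F s x) ((\<lambda>(p,s). (s, Zx (fst p) (snd p) s)) x))"
    by (rule continuous_on_compose2[OF assms])
       (auto intro!: continuous_intros ZxC2[unfolded case_prod_beta] Zx_in2 simp: case_prod_beta)
  then show ?thesis by (simp add: case_prod_beta)
qed

lemma int_tT_cont:
  fixes F :: "real \<times> real \<Rightarrow> real \<Rightarrow> real"
  assumes c: "continuous_on (({0..T} \<times> E) \<times> {0..T}) (\<lambda>(p,s). F p s)"
  shows "continuous_on ({0..T} \<times> E) (\<lambda>p. integral {fst p..T} (F p))"
proof -
  have cD: "compact ({0..T} \<times> E)" by (simp add: compact_Times)
  have IG: "continuous_on (({0..T} \<times> E) \<times> {0..T}) (\<lambda>(p,x). integral {0..x} (F p))"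
    by (rule param_int_cont[OF cD c]) (use T in simp)
  have Fi: "F p integrable_on {0..T}" if "p \<in> {0..T} \<times> E" for p
  proof -
    have "continuous_on {0..T} (\<lambda>\<rho>. (\<lambda>(p,\<rho>). F p \<rho>) ((\<lambda>\<rho>. (p, \<rho>)) \<rho>))"
      by (rule continuous_on_compose2[OF c]) (use that in \<open>auto intro!: continuous_intros\<close>)
    then have "continuous_on {0..T} (F p)" by simp
    then show ?thesis by (rule integrable_continuous_interval)
  qed
  have eq: "integral {fst p..T} (F p) = integral {0..T} (F p) - integral {0..fst p} (F p)" if "p \<in> {0..T} \<times> E" for p
    using int_split[of 0 "fst p" T "F p"] Fi[OF that] that by auto
  have c1: "continuous_on ({0..T} \<times> E) (\<lambda>p. (\<lambda>(p,x). integral {0..x} (F p)) ((\<lambda>p. (p, T)) p))"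
    by (rule continuous_on_compose2[OF IG]) (use T in \<open>auto intro!: continuous_intros\<close>)
  have c2: "continuous_on ({0..T} \<times> E) (\<lambda>p. (\<lambda>(p,x). integral {0..x} (F p)) ((\<lambda>p. (p, fst p)) p))"
    by (rule continuous_on_compose2[OF IG]) (auto intro!: continuous_intros)
  have "continuous_on ({0..T} \<times> E) (\<lambda>p. integral {0..T} (F p) - integral {0..fst p} (F p))"
    using c1 c2 by (intro continuous_intros) simp_all
  then show ?thesis by (rule continuous_on_eq) (use eq in auto)
qed

lemma Phi_cont: assumes d: "nice d" shows "continuous_on ({0..T} \<times> E) (\<lambda>(t,y). Phi d t y)"
proof -
  define F where "F p s = ghat s (d s) (Zx (fst p) (snd p) s) * Jx (fst p) (snd p) s" for p :: "real \<times> real" and s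
  have cF: "continuous_on (({0..T} \<times> E) \<times> {0..T}) (\<lambda>(p,s). F p s)"
    unfolding F_def using comp2_cont[OF gh_cont[OF d]] JxC2
    by (simp add: case_prod_beta continuous_on_mult)
  have c1: "continuous_on ({0..T} \<times> E) (\<lambda>p. integral {fst p..T} (F p))" by (rule int_tT_cont[OF cF])
  have c2: "continuous_on ({0..T} \<times> E) (\<lambda>p. h' (Zx (fst p) (snd p) T) * Jx (fst p) (snd p) T)"
  proof -
    have z: "continuous_on ({0..T} \<times> E) (\<lambda>p. (\<lambda>(p,s). Zx (fst p) (snd p) s) ((\<lambda>p. (p,T)) p))"
      by (rule continuous_on_compose2[OF ZxC2]) (use T in \<open>auto intro!: continuous_intros\<close>)
    have j: "continuous_on ({0..T} \<times> E) (\<lambda>p. (\<lambda>(p,s). Jx (fst p) (snd p) s) ((\<lambda>p. (p,T)) p))"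
      by (rule continuous_on_compose2[OF JxC2]) (use T in \<open>auto intro!: continuous_intros\<close>)
    have hz: "continuous_on ({0..T} \<times> E) (\<lambda>p. h' (Zx (fst p) (snd p) T))"
      by (rule continuous_on_compose2[OF h'_cont z[simplified]]) (use T in \<open>auto intro!: Zx_in2\<close>)
    show ?thesis using hz j by (intro continuous_intros) auto
  qed
  have eq: "Phi d t y = h' (Zx t y T) * Jx t y T + integral {t..T} (F (t,y))" if "(t,y) \<in> {0..T} \<times> E" for t y
  proof -
    have "integral {t..T} (\<lambda>s. ghat s (d s) (Z t y s) * J t y s) = integral {t..T} (F (t,y))"
      by (rule integral_cong) (simp add: F_def Zx_eq Jx_eq)
    moreover have "Zx t y T = Z t y T" "Jx t y T = J t y T" using that by (auto simp: Zx_eq Jx_eq)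
    ultimately show ?thesis unfolding Phi_def by simp
  qed
  show ?thesis
    by (rule continuous_on_eq[OF continuous_on_add[OF c2 c1]]) (use eq in auto)
qed

lemma ghZJ_cont: assumes d: "nice d" and t: "t \<in> {0..T}" and y: "y \<in> E"
  shows "continuous_on {t..T} (\<lambda>s. ghat s (d s) (Z t y s) * J t y s)"
proof -
  have "continuous_on {t..T} (\<lambda>s. ghat s (d s) (Z t y s))"
    by (rule comp_cont[OF gh_cont[OF d] Zcont[OF t y]]) (use t y Zin in auto)
  then show ?thesis by (intro continuous_intros J_cont t y)
qed

lemma QZ_cont: assumes d: "nice d" and t: "t \<in> {0..T}" and y: "y \<in> E"
  shows "continuous_on {t..T} (\<lambda>s. Q d s (Z t y s))"
  by (rule comp_cont[OF Q_cont[OF d] Zcont[OF t y]]) (use t y Zin in auto)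

lemma Phi_bnd: assumes d: "nice d" and t: "t \<in> {0..T}" and y: "y \<in> E"
  shows "\<bar>Phi d t y\<bar> \<le> Aa * exp (Cc * (T - t))"
proof -
  define gB where "gB s = Je * K1 + Je * L1 * Aa * exp (Cc * (T - s))" for s
  define G where "G s = Je * K1 * s - (Je * L1 * Aa / Cc) * exp (Cc * (T - s))" for s
  have Cc0: "Cc \<noteq> 0" using Cc_pos by simp
  have dG: "(G has_real_derivative gB s) (at s within {t..T})" for s
  proof -
    have "((\<lambda>s. exp (Cc * (T - s))) has_real_derivative (exp (Cc * (T - s)) * (- Cc))) (at s within {t..T})"
      by (rule derivative_eq_intros refl | simp)+
    then have c2: "((\<lambda>s. (Je * L1 * Aa / Cc) * exp (Cc * (T - s))) has_real_derivative (Je * L1 * Aa / Cc) * (exp (Cc * (T - s)) * (- Cc))) (at s within {t..T})"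
      by (rule DERIV_cmult)
    have c1: "((\<lambda>s. Je * K1 * s) has_real_derivative Je * K1 * 1) (at s within {t..T})"
      by (rule DERIV_cmult[OF DERIV_ident])
    have "(G has_real_derivative Je * K1 * 1 - (Je * L1 * Aa / Cc) * (exp (Cc * (T - s)) * (- Cc))) (at s within {t..T})"
      unfolding G_def by (rule DERIV_diff[OF c1 c2])
    then show ?thesis unfolding gB_def using Cc0 by (simp add: field_simps)
  qed
  have hasI: "(gB has_integral (G T - G t)) {t..T}"
    by (rule fundamental_theorem_of_calculus) (use t dG in \<open>auto simp: has_real_derivative_iff_has_vector_derivative[symmetric]\<close>)
  have int1: "(\<lambda>s. ghat s (d s) (Z t y s) * J t y s) integrable_on {t..T}"
    by (rule integrable_continuous_interval[OF ghZJ_cont[OF d t y]])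
  have "\<bar>integral {t..T} (\<lambda>s. ghat s (d s) (Z t y s) * J t y s)\<bar> \<le> integral {t..T} gB"
  proof -
    have "norm (integral {t..T} (\<lambda>s. ghat s (d s) (Z t y s) * J t y s)) \<le> integral {t..T} gB"
    proof (rule integral_norm_bound_integral[OF int1])
      show "gB integrable_on {t..T}" using hasI by blast
      fix s assume s: "s \<in> {t..T}"
      then have s0: "s \<in> {0..T}" using t by auto
      have "\<bar>ghat s (d s) (Z t y s)\<bar> \<le> L1 * (Aa * exp (Cc * (T - s))) + K1"
        by (rule gh_bnd(1)[OF d s0 Zin[OF t y s]])
      moreover have "0 \<le> J t y s" "J t y s \<le> Je" using J_bnd[OF t y s] by auto
      moreover have "0 \<le> L1 * (Aa * exp (Cc * (T - s))) + K1" using L1_0 K1_0 Aa_0 by simp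
      ultimately have "\<bar>ghat s (d s) (Z t y s)\<bar> * \<bar>J t y s\<bar> \<le> (L1 * (Aa * exp (Cc * (T - s))) + K1) * Je"
        by (intro mult_mono) auto
      then show "norm (ghat s (d s) (Z t y s) * J t y s) \<le> gB s"
        unfolding gB_def by (simp add: abs_mult algebra_simps)
    qed
    then show ?thesis by simp
  qed
  also have "integral {t..T} gB = G T - G t" using hasI by (rule integral_unique)
  also have "G T - G t = Je * K1 * (T - t) + (Je * L1 / Cc) * Aa * (exp (Cc * (T - t)) - 1)"
    unfolding G_def using Cc0 by (simp add: field_simps)
  also have "\<dots> \<le> Je * K1 * T + Aa * (exp (Cc * (T - t)) - 1)"
  proof (rule add_mono)
    show "Je * K1 * (T - t) \<le> Je * K1 * T" using t Je1 K1_0 by (simp add: mult_left_mono)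
    have q: "Je * L1 / Cc \<le> 1" using Cc_pos unfolding Cc_def by (simp add: divide_le_eq)
    have e: "0 \<le> Aa * (exp (Cc * (T - t)) - 1)" using Aa_0 Cc_pos t by simp
    have "(Je * L1 / Cc) * (Aa * (exp (Cc * (T - t)) - 1)) \<le> 1 * (Aa * (exp (Cc * (T - t)) - 1))"
      by (rule mult_right_mono[OF q e])
    then show "(Je * L1 / Cc) * Aa * (exp (Cc * (T - t)) - 1) \<le> Aa * (exp (Cc * (T - t)) - 1)"
      by (simp add: mult.assoc)
  qed
  finally have I: "\<bar>integral {t..T} (\<lambda>s. ghat s (d s) (Z t y s) * J t y s)\<bar> \<le> Je * K1 * T + Aa * (exp (Cc * (T - t)) - 1)" .
  have tT: "T \<in> {t..T}" using t by simp
  have ha: "\<bar>h' (Z t y T)\<bar> \<le> H1" by (rule H1[OF Zin[OF t y tT]])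
  have ja: "\<bar>J t y T\<bar> \<le> Je" using J_bnd[OF t y tT] by auto
  have "\<bar>h' (Z t y T) * J t y T\<bar> \<le> H1 * Je"
    unfolding abs_mult by (rule mult_mono[OF ha ja H1_0 abs_ge_zero])
  then have "\<bar>Phi d t y\<bar> \<le> H1 * Je + (Je * K1 * T + Aa * (exp (Cc * (T - t)) - 1))"
    unfolding Phi_def using I by linarith
  also have "\<dots> = Aa * exp (Cc * (T - t))" unfolding Aa_def by (simp add: algebra_simps)
  finally show ?thesis .
qed

lemma nice_Phi: "nice d \<Longrightarrow> nice (Phi d)"
  unfolding nice_def[of "Phi d"] using Phi_cont Phi_bnd by auto

end


context setting begin

lemma Phi_mod: assumes \<eta>: "\<eta> > 0"
  shows "\<exists>\<delta>>0. \<forall>d. nice d \<longrightarrow> (\<forall>t\<in>{0..T}. \<forall>y\<in>E. \<forall>y'\<in>E. \<bar>y - y'\<bar> < \<delta> \<longrightarrow> \<bar>Phi d t y - Phi d t y'\<bar> \<le> \<eta>)"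
proof -
  define M where "M = Je + H1 + Gb + 1"
  have M1: "1 \<le> M" unfolding M_def using Je1 H1_0 Gb_0 by simp
  define e where "e = \<eta> / (2 * M * (T + 1))"
  have e: "e > 0" unfolding e_def using \<eta> M1 T by simp
  have Je0: "Je > 0" using Je1 by simp
  obtain \<delta>h where \<delta>h: "\<delta>h > 0" "\<forall>x\<in>E. \<forall>x'\<in>E. \<bar>x - x'\<bar> < \<delta>h \<longrightarrow> \<bar>h' x - h' x'\<bar> < e"
    using uc_single[OF compact_Icc h'_cont e] by (elim exE conjE) (rule that; assumption)
  obtain \<delta>g where \<delta>g: "\<delta>g > 0" "\<forall>d. nice d \<longrightarrow> (\<forall>s\<in>{0..T}. \<forall>x\<in>E. \<forall>x'\<in>E. \<bar>x - x'\<bar> < \<delta>g \<longrightarrow>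
            \<bar>ghat s (d s) x - ghat s (d s) x'\<bar> < e)"
    using gh_mod[OF e] by (elim exE conjE) (rule that; assumption)
  have cD3: "compact D3" by (simp add: compact_Times)
  obtain \<delta>J where \<delta>J: "\<delta>J > 0" "\<forall>a b c a' b' c'. (a,b,c)\<in>D3 \<longrightarrow> (a',b',c')\<in>D3 \<longrightarrow> \<bar>a-a'\<bar> < \<delta>J \<longrightarrow> \<bar>b-b'\<bar> < \<delta>J
            \<longrightarrow> \<bar>c-c'\<bar> < \<delta>J \<longrightarrow> \<bar>(\<lambda>(t,y,s). Jx t y s) (a,b,c) - (\<lambda>(t,y,s). Jx t y s) (a',b',c')\<bar> < e"
    using uc_triple[OF cD3 Jx_cont e] by (elim exE conjE) (rule that; assumption)
  show ?thesis
  proof (intro exI[of _ "min (min (\<delta>h / Je) (\<delta>g / Je)) \<delta>J"] conjI allI impI ballI)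
    show "min (min (\<delta>h / Je) (\<delta>g / Je)) \<delta>J > 0" using \<delta>h(1) \<delta>g(1) \<delta>J(1) Je0 by simp
    fix d t y y' assume d: "nice d" and t: "t \<in> {0..T}" and y: "y \<in> E" and y': "y' \<in> E"
      and yy: "\<bar>y - y'\<bar> < min (min (\<delta>h / Je) (\<delta>g / Je)) \<delta>J"
    have zz: "\<bar>Z t y s - Z t y' s\<bar> < \<delta>h" "\<bar>Z t y s - Z t y' s\<bar> < \<delta>g" if s: "s \<in> {t..T}" for s
    proof -
      have "\<bar>Z t y s - Z t y' s\<bar> \<le> Je * \<bar>y - y'\<bar>" by (rule Zlip_y[OF t y y' s])
      moreover have "\<bar>y - y'\<bar> < \<delta>h / Je" "\<bar>y - y'\<bar> < \<delta>g / Je" using yy by simp_all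
      then have "Je * \<bar>y - y'\<bar> < Je * (\<delta>h / Je)" "Je * \<bar>y - y'\<bar> < Je * (\<delta>g / Je)"
        using mult_strict_left_mono Je0 by blast+
      ultimately show "\<bar>Z t y s - Z t y' s\<bar> < \<delta>h" "\<bar>Z t y s - Z t y' s\<bar> < \<delta>g" using Je0 by simp_all
    qed
    have jj: "\<bar>J t y s - J t y' s\<bar> \<le> e" if s: "s \<in> {t..T}" for s
    proof -
      have m: "(t,y,s) \<in> D3" "(t,y',s) \<in> D3" "\<bar>t - t\<bar> < \<delta>J" "\<bar>y - y'\<bar> < \<delta>J" "\<bar>s - s\<bar> < \<delta>J"
        using t y y' s yy \<delta>J(1) by auto
      have "\<bar>Jx t y s - Jx t y' s\<bar> < e" using \<delta>J(2)[rule_format, OF m] by simp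
      then show ?thesis using s by (simp add: Jx_eq)
    qed
    have tT: "T \<in> {t..T}" using t by simp
    have A: "\<bar>h' (Z t y T) * J t y T - h' (Z t y' T) * J t y' T\<bar> \<le> e * Je + H1 * e"
    proof (rule prod_diff_bnd)
      show "0 \<le> J t y T" "J t y T \<le> Je" using J_bnd[OF t y tT] by auto
      have "\<bar>h' (Z t y T) - h' (Z t y' T)\<bar> < e" using \<delta>h(2) Zin[OF t y tT] Zin[OF t y' tT] zz(1)[OF tT] by blast
      then show "\<bar>h' (Z t y T) - h' (Z t y' T)\<bar> \<le> e" by simp
      show "\<bar>h' (Z t y' T)\<bar> \<le> H1" by (rule H1[OF Zin[OF t y' tT]])
      show "\<bar>J t y T - J t y' T\<bar> \<le> e" by (rule jj[OF tT])
    qed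
    have i1: "(\<lambda>s. ghat s (d s) (Z t y s) * J t y s) integrable_on {t..T}"
      by (rule integrable_continuous_interval[OF ghZJ_cont[OF d t y]])
    have i2: "(\<lambda>s. ghat s (d s) (Z t y' s) * J t y' s) integrable_on {t..T}"
      by (rule integrable_continuous_interval[OF ghZJ_cont[OF d t y']])
    have "\<bar>integral {t..T} (\<lambda>s. ghat s (d s) (Z t y s) * J t y s - ghat s (d s) (Z t y' s) * J t y' s)\<bar>
          \<le> (e * Je + Gb * e) * (T - t)"
    proof (rule int_bound)
      show "(\<lambda>s. ghat s (d s) (Z t y s) * J t y s - ghat s (d s) (Z t y' s) * J t y' s) integrable_on {t..T}"
        using i1 i2 by (rule integrable_diff)
      fix s assume s: "s \<in> {t..T}"
      then have s0: "s \<in> {0..T}" using t by auto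
      show "\<bar>ghat s (d s) (Z t y s) * J t y s - ghat s (d s) (Z t y' s) * J t y' s\<bar> \<le> e * Je + Gb * e"
      proof (rule prod_diff_bnd)
        show "0 \<le> J t y s" "J t y s \<le> Je" using J_bnd[OF t y s] by auto
        have "\<bar>ghat s (d s) (Z t y s) - ghat s (d s) (Z t y' s)\<bar> < e"
          using \<delta>g(2) d s0 Zin[OF t y s] Zin[OF t y' s] zz(2)[OF s] by blast
        then show "\<bar>ghat s (d s) (Z t y s) - ghat s (d s) (Z t y' s)\<bar> \<le> e" by simp
        show "\<bar>ghat s (d s) (Z t y' s)\<bar> \<le> Gb" by (rule gh_bnd(2)[OF d s0 Zin[OF t y' s]])
        show "\<bar>J t y s - J t y' s\<bar> \<le> e" by (rule jj[OF s])
      qed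
    qed (use t in auto)
    then have B: "\<bar>integral {t..T} (\<lambda>s. ghat s (d s) (Z t y s) * J t y s) - integral {t..T} (\<lambda>s. ghat s (d s) (Z t y' s) * J t y' s)\<bar>
          \<le> (e * Je + Gb * e) * (T - t)" using integral_diff[OF i1 i2] by simp
    have "(e * Je + Gb * e) * (T - t) \<le> (e * M) * T"
      using e t Je1 H1_0 Gb_0 unfolding M_def by (intro mult_mono) (auto simp: algebra_simps)
    moreover have "e * Je + H1 * e \<le> e * M" using e Gb_0 unfolding M_def by (simp add: algebra_simps)
    moreover have "e * M * T + e * M = \<eta> / 2"
    proof -
      have MT: "2 * M * (T + 1) \<noteq> 0" using M1 T by simp
      have f: "e * (2 * M * (T + 1)) = \<eta>" unfolding e_def using MT by simp
      have "e * M * T + e * M = (e * (2 * M * (T + 1))) / 2" by (simp add: algebra_simps)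
      then show ?thesis using f by simp
    qed
    ultimately show "\<bar>Phi d t y - Phi d t y'\<bar> \<le> \<eta>"
      using A B \<eta> unfolding Phi_def by linarith
  qed
qed

lemma Psi_deriv: assumes d: "nice d" and t: "t \<in> {0..T}" and y: "y \<in> E"
  shows "(Psi d t has_real_derivative Phi d t y) (at y within E)"
proof (rule deriv_from_ud)
  fix \<eta> :: real assume \<eta>: "\<eta> > 0"
  define M where "M = (1 + T) * (Je + H1 + Gb + 1)"
  have N1: "1 \<le> Je + H1 + Gb + 1" using Je1 H1_0 Gb_0 by simp
  have "1 * 1 \<le> (1 + T) * (Je + H1 + Gb + 1)" by (rule mult_mono) (use T N1 in auto)
  then have M1: "1 \<le> M" unfolding M_def by simp
  define e where "e = \<eta> / M"
  have e: "e > 0" unfolding e_def using \<eta> M1 by simp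
  have Je0: "Je > 0" using Je1 by simp
  obtain \<delta>z where \<delta>z: "\<delta>z > 0" "\<forall>t\<in>{0..T}. \<forall>y\<in>E. \<forall>y'\<in>E. \<forall>s\<in>{t..T}. \<bar>y' - y\<bar> < \<delta>z \<longrightarrow>
           \<bar>Z t y' s - Z t y s - J t y s * (y' - y)\<bar> \<le> e * \<bar>y' - y\<bar>"
    using Z_ud[OF e] by (elim exE conjE) (rule that; assumption)
  obtain \<delta>h where \<delta>h: "\<delta>h > 0" "\<forall>x\<in>E. \<forall>x'\<in>E. \<bar>x - x'\<bar> < \<delta>h \<longrightarrow> \<bar>h' x - h' x'\<bar> < e"
    using uc_single[OF compact_Icc h'_cont e] by (elim exE conjE) (rule that; assumption)
  obtain \<delta>g where \<delta>g: "\<delta>g > 0" "\<forall>d. nice d \<longrightarrow> (\<forall>s\<in>{0..T}. \<forall>x\<in>E. \<forall>x'\<in>E. \<bar>x - x'\<bar> < \<delta>g \<longrightarrow>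
            \<bar>ghat s (d s) x - ghat s (d s) x'\<bar> < e)"
    using gh_mod[OF e] by (elim exE conjE) (rule that; assumption)
  show "\<exists>\<delta>>0. \<forall>y'\<in>E. \<bar>y' - y\<bar> < \<delta> \<longrightarrow> \<bar>Psi d t y' - Psi d t y - Phi d t y * (y' - y)\<bar> \<le> \<eta> * \<bar>y' - y\<bar>"
  proof (intro exI[of _ "min \<delta>z (min (\<delta>h / Je) (\<delta>g / Je))"] conjI ballI impI)
    show "min \<delta>z (min (\<delta>h / Je) (\<delta>g / Je)) > 0" using \<delta>z(1) \<delta>h(1) \<delta>g(1) Je0 by simp
    fix y' assume y': "y' \<in> E" and yy: "\<bar>y' - y\<bar> < min \<delta>z (min (\<delta>h / Je) (\<delta>g / Je))"
    define dy where "dy = y' - y"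
    have zl: "\<bar>Z t y' s - Z t y s\<bar> \<le> Je * \<bar>dy\<bar>" if s: "s \<in> {t..T}" for s
      unfolding dy_def by (rule Zlip_y[OF t y' y s])
    have zz: "\<bar>Z t y' s - Z t y s\<bar> < \<delta>h" "\<bar>Z t y' s - Z t y s\<bar> < \<delta>g" if s: "s \<in> {t..T}" for s
    proof -
      have "\<bar>dy\<bar> < \<delta>h / Je" "\<bar>dy\<bar> < \<delta>g / Je" using yy unfolding dy_def by simp_all
      then have "Je * \<bar>dy\<bar> < Je * (\<delta>h / Je)" "Je * \<bar>dy\<bar> < Je * (\<delta>g / Je)"
        using mult_strict_left_mono Je0 by blast+
      then show "\<bar>Z t y' s - Z t y s\<bar> < \<delta>h" "\<bar>Z t y' s - Z t y s\<bar> < \<delta>g" using zl[OF s] Je0 by simp_all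
    qed
    have zud: "\<bar>Z t y' s - Z t y s - J t y s * dy\<bar> \<le> e * \<bar>dy\<bar>" if s: "s \<in> {t..T}" for s
      using \<delta>z(2) t y y' s yy unfolding dy_def by auto
    have tT: "T \<in> {t..T}" using t by simp
    have H: "\<bar>h (Z t y' T) - h (Z t y T) - h' (Z t y T) * J t y T * dy\<bar> \<le> e * Je * \<bar>dy\<bar> + H1 * (e * \<bar>dy\<bar>)"
    proof -
      have "\<bar>h (Z t y' T) - h (Z t y T) - h' (Z t y T) * (Z t y' T - Z t y T)\<bar> \<le> e * \<bar>Z t y' T - Z t y T\<bar>"
      proof (rule unif_deriv[of E])
        fix \<xi> assume \<xi>: "\<xi> \<in> E" "\<bar>\<xi> - Z t y T\<bar> \<le> \<bar>Z t y' T - Z t y T\<bar>"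
        then have "\<bar>\<xi> - Z t y T\<bar> < \<delta>h" using zz(1)[OF tT] by linarith
        then have "\<bar>h' \<xi> - h' (Z t y T)\<bar> < e" using \<delta>h(2) \<xi>(1) Zin[OF t y tT] by blast
        then show "\<bar>h' \<xi> - h' (Z t y T)\<bar> \<le> e" by simp
      qed (use h_deriv Zin[OF t y tT] Zin[OF t y' tT] in auto)
      also have "\<dots> \<le> e * (Je * \<bar>dy\<bar>)" using zl[OF tT] e by (simp add: mult_left_mono)
      finally have 1: "\<bar>h (Z t y' T) - h (Z t y T) - h' (Z t y T) * (Z t y' T - Z t y T)\<bar> \<le> e * Je * \<bar>dy\<bar>" by simp
      have 2: "\<bar>h' (Z t y T)\<bar> * \<bar>Z t y' T - Z t y T - J t y T * dy\<bar> \<le> H1 * (e * \<bar>dy\<bar>)"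
        using H1[OF Zin[OF t y tT]] zud[OF tT] by (intro mult_mono) auto
      show ?thesis using ud_comp[of h "Z t y' T" "Z t y T" h' "J t y T" dy] 1 2 by linarith
    qed
    have P: "\<bar>Q d s (Z t y' s) - Q d s (Z t y s) - ghat s (d s) (Z t y s) * J t y s * dy\<bar> \<le> e * Je * \<bar>dy\<bar> + Gb * (e * \<bar>dy\<bar>)"
      if s: "s \<in> {t..T}" for s
    proof -
      have s0: "s \<in> {0..T}" using s t by auto
      have "\<bar>Q d s (Z t y' s) - Q d s (Z t y s) - ghat s (d s) (Z t y s) * (Z t y' s - Z t y s)\<bar> \<le> e * \<bar>Z t y' s - Z t y s\<bar>"
      proof (rule unif_deriv[of E])
        fix \<xi> assume \<xi>: "\<xi> \<in> E" "\<bar>\<xi> - Z t y s\<bar> \<le> \<bar>Z t y' s - Z t y s\<bar>"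
        then have "\<bar>\<xi> - Z t y s\<bar> < \<delta>g" using zz(2)[OF s] by linarith
        then have "\<bar>ghat s (d s) \<xi> - ghat s (d s) (Z t y s)\<bar> < e" using \<delta>g(2) d s0 \<xi>(1) Zin[OF t y s] by blast
        then show "\<bar>ghat s (d s) \<xi> - ghat s (d s) (Z t y s)\<bar> \<le> e" by simp
      qed (use Q_deriv[OF d s0] Zin[OF t y s] Zin[OF t y' s] in auto)
      also have "\<dots> \<le> e * (Je * \<bar>dy\<bar>)" using zl[OF s] e by (simp add: mult_left_mono)
      finally have 1: "\<bar>Q d s (Z t y' s) - Q d s (Z t y s) - ghat s (d s) (Z t y s) * (Z t y' s - Z t y s)\<bar> \<le> e * Je * \<bar>dy\<bar>" by simp
      have 2: "\<bar>ghat s (d s) (Z t y s)\<bar> * \<bar>Z t y' s - Z t y s - J t y s * dy\<bar> \<le> Gb * (e * \<bar>dy\<bar>)"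
        using gh_bnd(2)[OF d s0 Zin[OF t y s]] zud[OF s] by (intro mult_mono) auto
      show ?thesis using ud_comp[of "Q d s" "Z t y' s" "Z t y s" "ghat s (d s)" "J t y s" dy] 1 2 by linarith
    qed
    have i1: "(\<lambda>s. Q d s (Z t y' s) - Q d s (Z t l s)) integrable_on {t..T}"
      by (rule integrable_continuous_interval) (intro continuous_intros QZ_cont d t y' lr, use lr in simp)
    have i2: "(\<lambda>s. Q d s (Z t y s) - Q d s (Z t l s)) integrable_on {t..T}"
      by (rule integrable_continuous_interval) (intro continuous_intros QZ_cont d t y, use lr in simp)
    have i3: "(\<lambda>s. ghat s (d s) (Z t y s) * J t y s) integrable_on {t..T}"
      by (rule integrable_continuous_interval[OF ghZJ_cont[OF d t y]])
    have iP: "(\<lambda>s. Q d s (Z t y' s) - Q d s (Z t y s) - ghat s (d s) (Z t y s) * J t y s * dy) integrable_on {t..T}"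
      by (rule integrable_continuous_interval) (intro continuous_intros QZ_cont ghZJ_cont[OF d t y, unfolded] d t y y' J_cont)
    have IE: "integral {t..T} (\<lambda>s. Q d s (Z t y' s) - Q d s (Z t y s) - ghat s (d s) (Z t y s) * J t y s * dy)
       = integral {t..T} (\<lambda>s. Q d s (Z t y' s) - Q d s (Z t l s)) - integral {t..T} (\<lambda>s. Q d s (Z t y s) - Q d s (Z t l s))
         - integral {t..T} (\<lambda>s. ghat s (d s) (Z t y s) * J t y s) * dy"
    proof -
      have "integral {t..T} (\<lambda>s. Q d s (Z t y' s) - Q d s (Z t y s) - ghat s (d s) (Z t y s) * J t y s * dy)
          = integral {t..T} (\<lambda>s. ((Q d s (Z t y' s) - Q d s (Z t l s)) - (Q d s (Z t y s) - Q d s (Z t l s)))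
               - (ghat s (d s) (Z t y s) * J t y s) * dy)"
        by (rule integral_cong) simp
      also have "\<dots> = integral {t..T} (\<lambda>s. (Q d s (Z t y' s) - Q d s (Z t l s)) - (Q d s (Z t y s) - Q d s (Z t l s)))
               - integral {t..T} (\<lambda>s. (ghat s (d s) (Z t y s) * J t y s) * dy)"
        by (rule integral_diff[OF integrable_diff[OF i1 i2] integrable_on_mult_left[OF i3]])
      also have "\<dots> = integral {t..T} (\<lambda>s. Q d s (Z t y' s) - Q d s (Z t l s)) - integral {t..T} (\<lambda>s. Q d s (Z t y s) - Q d s (Z t l s))
         - integral {t..T} (\<lambda>s. ghat s (d s) (Z t y s) * J t y s) * dy"
        using integral_diff[OF i1 i2] integral_mult_left by simp
      finally show ?thesis .
    qed
    have IB: "\<bar>integral {t..T} (\<lambda>s. Q d s (Z t y' s) - Q d s (Z t y s) - ghat s (d s) (Z t y s) * J t y s * dy)\<bar>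
          \<le> (e * Je * \<bar>dy\<bar> + Gb * (e * \<bar>dy\<bar>)) * (T - t)"
      by (rule int_bound[OF _ iP]) (use t P in auto)
    have eqPsi: "Psi d t y' - Psi d t y - Phi d t y * dy =
       (h (Z t y' T) - h (Z t y T) - h' (Z t y T) * J t y T * dy) +
       integral {t..T} (\<lambda>s. Q d s (Z t y' s) - Q d s (Z t y s) - ghat s (d s) (Z t y s) * J t y s * dy)"
      unfolding IE Psi_def Phi_def by (simp add: algebra_simps)
    have "(e * Je * \<bar>dy\<bar> + Gb * (e * \<bar>dy\<bar>)) * (T - t) \<le> (e * \<bar>dy\<bar> * (Je + H1 + Gb + 1)) * T"
      using e t Je1 H1_0 Gb_0 by (intro mult_mono) (auto simp: algebra_simps)
    moreover have "e * Je * \<bar>dy\<bar> + H1 * (e * \<bar>dy\<bar>) \<le> e * \<bar>dy\<bar> * (Je + H1 + Gb + 1)"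
      using e Gb_0 by (simp add: algebra_simps)
    moreover have "e * \<bar>dy\<bar> * (Je + H1 + Gb + 1) * T + e * \<bar>dy\<bar> * (Je + H1 + Gb + 1) = \<eta> * \<bar>dy\<bar>"
    proof -
      have MT: "M \<noteq> 0" using M1 by simp
      have f: "e * M = \<eta>" unfolding e_def using MT by simp
      have "e * \<bar>dy\<bar> * (Je + H1 + Gb + 1) * T + e * \<bar>dy\<bar> * (Je + H1 + Gb + 1) = (e * M) * \<bar>dy\<bar>"
        unfolding M_def by (simp add: algebra_simps)
      then show ?thesis using f by simp
    qed
    ultimately show "\<bar>Psi d t y' - Psi d t y - Phi d t y * (y' - y)\<bar> \<le> \<eta> * \<bar>y' - y\<bar>"
      using H IB eqPsi unfolding dy_def[symmetric] by linarith
  qed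
qed

end


context setting begin

definition "dseq n = (Phi ^^ n) (\<lambda>s x. 0)"
definition "wseq n = (case n of 0 \<Rightarrow> (\<lambda>t y. 0) | Suc m \<Rightarrow> Psi (dseq m))"

lemma dseq_Suc: "dseq (Suc n) = Phi (dseq n)" unfolding dseq_def by simp
lemma wseq_Suc: "wseq (Suc n) = Psi (dseq n)" unfolding wseq_def by simp

lemma nice_dseq: "nice (dseq n)"
proof (induction n)
  case 0
  show ?case unfolding dseq_def nice_def using Aa_0 by (simp add: continuous_on_const)
next
  case (Suc n) then show ?case unfolding dseq_Suc by (rule nice_Phi)
qed

lemma wseq_deriv: assumes t: "t \<in> {0..T}" and y: "y \<in> E"
  shows "(wseq n t has_real_derivative dseq n t y) (at y within E)"
proof (cases n)
  case 0 then show ?thesis unfolding wseq_def dseq_def by simp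
next
  case (Suc m) then show ?thesis using Psi_deriv[OF nice_dseq t y, of m] by (simp add: wseq_Suc dseq_Suc)
qed

lemma u_slice: "s \<in> {0..T} \<Longrightarrow> continuous_on E (u s)"
  using cont_slice[OF u_cont] by simp

lemma L_0: "0 \<le> L"
proof -
  have 0: "(0::real) \<in> {0..T}" using T by simp
  have c1: "(\<lambda>z. 1::real) \<in> Cb E" "(\<lambda>z. 0::real) \<in> Cb E" unfolding Cb_def by (auto intro: continuous_on_const)
  have "supE E (\<lambda>z. g 0 (\<lambda>z. 1) z - g 0 (\<lambda>z. 0) z) \<le> L * supE E (\<lambda>z. (1::real) - 0)"
    using a2 0 c1 by blast
  moreover have "supE E (\<lambda>z. (1::real) - 0) = 1" unfolding supE_def using E_ne by simp
  moreover have "0 \<le> supE E (\<lambda>z. g 0 (\<lambda>z. 1) z - g 0 (\<lambda>z. 0) z)"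
  proof -
    have "continuous_on E (g 0 (\<lambda>z. 1))" "continuous_on E (g 0 (\<lambda>z. 0))" using g_Cb 0 c1 unfolding Cb_def by blast+
    then have "\<bar>g 0 (\<lambda>z. 1) l - g 0 (\<lambda>z. 0) l\<bar> \<le> supE E (\<lambda>z. g 0 (\<lambda>z. 1) z - g 0 (\<lambda>z. 0) z)"
      by (intro supE_ge) (auto intro!: continuous_intros simp: lr less_imp_le)
    then show ?thesis by linarith
  qed
  ultimately show ?thesis by simp
qed

definition "Ub = (SOME M. \<forall>p\<in>{0..T} \<times> E. \<bar>(\<lambda>(t,z). u t z) p\<bar> \<le> M)"

lemma Ub: "t \<in> {0..T} \<Longrightarrow> y \<in> E \<Longrightarrow> \<bar>u t y\<bar> \<le> Ub"
proof -
  have "\<exists>M. \<forall>p\<in>{0..T} \<times> E. \<bar>(\<lambda>(t,z). u t z) p\<bar> \<le> M"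
    using compact_imp_bounded[OF compact_continuous_image[OF u_cont]] unfolding bounded_iff
    by (force simp: compact_Times)
  then have "\<forall>p\<in>{0..T} \<times> E. \<bar>(\<lambda>(t,z). u t z) p\<bar> \<le> Ub" unfolding Ub_def by (rule someI_ex)
  then show "t \<in> {0..T} \<Longrightarrow> y \<in> E \<Longrightarrow> \<bar>u t y\<bar> \<le> Ub" by force
qed

definition "ebd n t = 2 * Ub * (2 * L * (T - t)) ^ n / fact n"

lemma ebd_int: assumes t: "t \<in> {0..T}"
  shows "((\<lambda>s. 2 * L * ebd m s) has_integral ebd (Suc m) t) {t..T}"
proof -
  define G where "G s = - (2 * Ub / fact (Suc m)) * (2 * L * (T - s)) ^ Suc m" for s
  have dG: "(G has_real_derivative 2 * L * ebd m s) (at s within {t..T})" for s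
  proof -
    have "((\<lambda>s. (2 * L * (T - s)) ^ Suc m) has_real_derivative
           real (Suc m) * (2 * L * (T - s)) ^ (Suc m - 1) * (2 * L * (0 - 1))) (at s within {t..T})"
      by (rule derivative_eq_intros refl | simp)+
    then have "(G has_real_derivative - (2 * Ub / fact (Suc m)) * (real (Suc m) * (2 * L * (T - s)) ^ m * (2 * L * (0 - 1)))) (at s within {t..T})"
      unfolding G_def by (intro DERIV_cmult) simp
    moreover have "- (2 * Ub / fact (Suc m)) * (real (Suc m) * (2 * L * (T - s)) ^ m * (2 * L * (0 - 1))) = 2 * L * ebd m s"
      unfolding ebd_def by (simp add: field_simps del: of_nat_Suc)
    ultimately show ?thesis by simp
  qed
  have "((\<lambda>s. 2 * L * ebd m s) has_integral (G T - G t)) {t..T}"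
    by (rule fundamental_theorem_of_calculus) (use t dG in \<open>auto simp: has_real_derivative_iff_has_vector_derivative[symmetric]\<close>)
  moreover have "G T - G t = ebd (Suc m) t" unfolding G_def ebd_def by (simp add: field_simps)
  ultimately show ?thesis by simp
qed

lemma err: "t \<in> {0..T} \<Longrightarrow> y \<in> E \<Longrightarrow> \<bar>u t y - u t l - wseq n t y\<bar> \<le> ebd n t"
proof (induction n arbitrary: t y)
  case 0
  then show ?case unfolding wseq_def ebd_def using Ub[of t y] Ub[of t l] lr by simp
next
  case (Suc m)
  have t: "t \<in> {0..T}" and y: "y \<in> E" using Suc.prems by auto
  have lE: "l \<in> E" using lr by simp
  define d where "d = dseq m"
  define w where "w = wseq m"
  have nd: "nice d" unfolding d_def by (rule nice_dseq)
  define G where "G s = g s (u s)" for s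
  define v where "v s = (\<lambda>x. w s x + u s l)" for s
  have vC1: "C1b_deriv E (v s) (d s)" if s: "s \<in> {0..T}" for s
    unfolding C1b_deriv_def
  proof (intro conjI)
    have dv: "(v s has_real_derivative d s x) (at x within E)" if "x \<in> E" for x
      unfolding v_def w_def d_def using wseq_deriv[OF s that, of m] by (intro derivative_eq_intros) auto
    then show "continuous_on E (v s)" by (rule DERIV_continuous_on)
    show "continuous_on E (d s)" using nd s unfolding nice_def by (intro cont_slice) auto
    show "\<exists>M. \<forall>z\<in>E. \<bar>d s z\<bar> \<le> M" using nice_bnd[OF nd s] by blast
    show "\<forall>z\<in>E. (v s has_real_derivative d s z) (at z within E)" using dv by blast
  qed
  have vCb: "v s \<in> Cb E" if "s \<in> {0..T}" for s using vC1[OF that] unfolding C1b_deriv_def Cb_def by simp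
  have uCb: "u s \<in> Cb E" if "s \<in> {0..T}" for s using u_slice[OF that] unfolding Cb_def by simp
  have gQ: "g s (v s) x - g s (v s) l = Q d s x" if s: "s \<in> {0..T}" and x: "x \<in> E" for s x
  proof -
    have gd: "(g s (v s) has_real_derivative ghat s (d s) z) (at z within E)" if "z \<in> E" for z
      using b2_deriv s vC1[OF s] that by blast
    have "(ghat s (d s) has_integral (g s (v s) x - g s (v s) l)) {l..x}"
    proof (rule fundamental_theorem_of_calculus)
      show "l \<le> x" using x by simp
      fix z assume z: "z \<in> {l..x}"
      then have zE: "z \<in> E" using x by auto
      have "(g s (v s) has_real_derivative ghat s (d s) z) (at z within {l..x})"
        by (rule has_field_derivative_subset[OF gd[OF zE]]) (use x in auto)
      then show "(g s (v s) has_vector_derivative ghat s (d s) z) (at z within {l..x})"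
        by (simp add: has_real_derivative_iff_has_vector_derivative)
    qed
    then show ?thesis unfolding Q_def by (simp add: integral_unique)
  qed
  have Gb: "\<bar>G s x - g s (v s) x\<bar> \<le> L * ebd m s" if s: "s \<in> {0..T}" and x: "x \<in> E" for s x
  proof -
    have "\<bar>G s x - g s (v s) x\<bar> \<le> supE E (\<lambda>z. G s z - g s (v s) z)"
    proof (rule supE_ge[OF compact_Icc _ x])
      have "continuous_on E (G s)" "continuous_on E (g s (v s))"
        using g_Cb s uCb[OF s] vCb[OF s] unfolding G_def Cb_def by blast+
      then show "continuous_on E (\<lambda>z. G s z - g s (v s) z)" by (intro continuous_intros)
    qed
    also have "\<dots> \<le> L * supE E (\<lambda>z. u s z - v s z)" unfolding G_def using a2 s uCb[OF s] vCb[OF s] by blast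
    also have "\<dots> \<le> L * ebd m s"
    proof (rule mult_left_mono[OF _ L_0])
      show "supE E (\<lambda>z. u s z - v s z) \<le> ebd m s"
      proof (rule supE_le[OF E_ne])
        fix z assume z: "z \<in> E"
        show "\<bar>u s z - v s z\<bar> \<le> ebd m s" unfolding v_def w_def using Suc.IH[OF s z] by (simp add: algebra_simps)
      qed
    qed
    finally show ?thesis .
  qed
  have tT: "T \<in> {t..T}" using t by simp
  have hy: "((\<lambda>s. G s (Z t y s)) has_integral (u t y - h (Z t y T))) {t..T}" unfolding G_def using u_repr t y by blast
  have hl: "((\<lambda>s. G s (Z t l s)) has_integral (u t l - h (Z t l T))) {t..T}" unfolding G_def using u_repr t lE by blast
  have iQ: "(\<lambda>s. Q d s (Z t y s) - Q d s (Z t l s)) integrable_on {t..T}"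
    by (rule integrable_continuous_interval) (intro continuous_intros QZ_cont nd t y lE)
  define F where "F s = (G s (Z t y s) - G s (Z t l s)) - (Q d s (Z t y s) - Q d s (Z t l s))" for s
  have iF: "F integrable_on {t..T}" unfolding F_def
    by (intro integrable_diff iQ) (use hy hl in blast)+
  have IF: "integral {t..T} F = u t y - u t l - wseq (Suc m) t y"
  proof -
    have "integral {t..T} F = integral {t..T} (\<lambda>s. G s (Z t y s) - G s (Z t l s)) - integral {t..T} (\<lambda>s. Q d s (Z t y s) - Q d s (Z t l s))"
      unfolding F_def by (rule integral_diff[OF integrable_diff iQ]) (use hy hl in blast)+
    also have "integral {t..T} (\<lambda>s. G s (Z t y s) - G s (Z t l s)) = (u t y - h (Z t y T)) - (u t l - h (Z t l T))"
      using integral_unique[OF has_integral_diff[OF hy hl]] by simp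
    finally show ?thesis unfolding wseq_Suc Psi_def d_def by simp
  qed
  have "\<bar>integral {t..T} F\<bar> \<le> integral {t..T} (\<lambda>s. 2 * L * ebd m s)"
  proof -
    have "norm (integral {t..T} F) \<le> integral {t..T} (\<lambda>s. 2 * L * ebd m s)"
    proof (rule integral_norm_bound_integral[OF iF])
      show "(\<lambda>s. 2 * L * ebd m s) integrable_on {t..T}" using ebd_int[OF t] by blast
      fix s assume s: "s \<in> {t..T}"
      then have s0: "s \<in> {0..T}" using t by auto
      have zy: "Z t y s \<in> E" and zl: "Z t l s \<in> E" using Zin[OF t y s] Zin[OF t lE s] by auto
      have "F s = (G s (Z t y s) - g s (v s) (Z t y s)) - (G s (Z t l s) - g s (v s) (Z t l s))"
        unfolding F_def using gQ[OF s0 zy] gQ[OF s0 zl] by simp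
      then show "norm (F s) \<le> 2 * L * ebd m s" using Gb[OF s0 zy] Gb[OF s0 zl] by simp
    qed
    then show ?thesis by simp
  qed
  also have "\<dots> = ebd (Suc m) t" using ebd_int[OF t] by (rule integral_unique)
  finally show ?case using IF by simp
qed

end


context setting begin

definition "en n = 2 * Ub * (2 * L * T) ^ n / fact n"

lemma Ub_0: "0 \<le> Ub" using Ub[of 0 l] T lr by auto

lemma en_lim: "en \<longlonglongrightarrow> 0"
proof -
  have "(\<lambda>n. inverse (fact n) * (2 * L * T) ^ n) \<longlonglongrightarrow> 0"
    by (rule summable_LIMSEQ_zero[OF summable_exp])
  then have "(\<lambda>n. 2 * Ub * (inverse (fact n) * (2 * L * T) ^ n)) \<longlonglongrightarrow> 2 * Ub * 0"
    by (intro tendsto_mult tendsto_const)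
  then show ?thesis unfolding en_def by (simp add: field_simps)
qed

lemma ebd_le: assumes "t \<in> {0..T}" shows "ebd n t \<le> en n"
proof -
  have "(2 * L * (T - t)) ^ n \<le> (2 * L * T) ^ n"
    using assms L_0 by (intro power_mono) (auto simp: mult_left_mono)
  then show ?thesis unfolding ebd_def en_def using Ub_0
    by (intro divide_right_mono mult_left_mono) auto
qed

lemma err2: "t \<in> {0..T} \<Longrightarrow> y \<in> E \<Longrightarrow> \<bar>u t y - u t l - wseq n t y\<bar> \<le> en n"
  using err ebd_le order_trans by blast

lemma d_mod: assumes \<eta>: "\<eta> > 0"
  shows "\<exists>\<delta>>0. \<forall>n t y y'. t \<in> {0..T} \<longrightarrow> y \<in> E \<longrightarrow> y' \<in> E \<longrightarrow> \<bar>y - y'\<bar> < \<delta> \<longrightarrow> \<bar>dseq n t y - dseq n t y'\<bar> \<le> \<eta>"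
proof -
  obtain \<delta> where \<delta>: "\<delta> > 0" "\<forall>d. nice d \<longrightarrow> (\<forall>t\<in>{0..T}. \<forall>y\<in>E. \<forall>y'\<in>E. \<bar>y - y'\<bar> < \<delta> \<longrightarrow> \<bar>Phi d t y - Phi d t y'\<bar> \<le> \<eta>)"
    using Phi_mod[OF \<eta>] by (elim exE conjE) (rule that; assumption)
  show ?thesis
  proof (intro exI[of _ \<delta>] conjI allI impI \<delta>(1))
    fix n t y y' assume h: "t \<in> {0..T}" "y \<in> E" "y' \<in> E" "\<bar>y - y'\<bar> < \<delta>"
    show "\<bar>dseq n t y - dseq n t y'\<bar> \<le> \<eta>"
    proof (cases n)
      case 0 then show ?thesis using \<eta> by (simp add: dseq_def)
    next
      case (Suc m)
      have "\<bar>Phi (dseq m) t y - Phi (dseq m) t y'\<bar> \<le> \<eta>" using \<delta>(2) nice_dseq h by blast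
      then show ?thesis using Suc by (simp add: dseq_Suc)
    qed
  qed
qed

lemma w_lin: assumes \<eta>: "\<eta> > 0"
  shows "\<exists>\<delta>>0. \<forall>n t y y'. t \<in> {0..T} \<longrightarrow> y \<in> E \<longrightarrow> y' \<in> E \<longrightarrow> \<bar>y' - y\<bar> < \<delta> \<longrightarrow>
     \<bar>wseq n t y' - wseq n t y - dseq n t y * (y' - y)\<bar> \<le> \<eta> * \<bar>y' - y\<bar>"
proof -
  obtain \<delta> where \<delta>: "\<delta> > 0" "\<forall>n t y y'. t \<in> {0..T} \<longrightarrow> y \<in> E \<longrightarrow> y' \<in> E \<longrightarrow> \<bar>y - y'\<bar> < \<delta> \<longrightarrow> \<bar>dseq n t y - dseq n t y'\<bar> \<le> \<eta>"
    using d_mod[OF \<eta>] by (elim exE conjE) (rule that; assumption)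
  show ?thesis
  proof (intro exI[of _ \<delta>] conjI allI impI \<delta>(1))
    fix n t y y' assume h: "t \<in> {0..T}" "y \<in> E" "y' \<in> E" "\<bar>y' - y\<bar> < \<delta>"
    show "\<bar>wseq n t y' - wseq n t y - dseq n t y * (y' - y)\<bar> \<le> \<eta> * \<bar>y' - y\<bar>"
    proof (rule unif_deriv[of E])
      fix \<xi> assume \<xi>: "\<xi> \<in> E" "\<bar>\<xi> - y\<bar> \<le> \<bar>y' - y\<bar>"
      then have "\<bar>\<xi> - y\<bar> < \<delta>" using h by linarith
      then show "\<bar>dseq n t \<xi> - dseq n t y\<bar> \<le> \<eta>" using \<delta>(2) h \<xi> by blast
    qed (use h wseq_deriv in auto)
  qed
qed

lemma d_cauchy: "uniformly_Cauchy_on ({0..T} \<times> E) (\<lambda>n p. dseq n (fst p) (snd p))"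
proof (rule uniformly_Cauchy_onI)
  fix e :: real assume e: "e > 0"
  have e4: "e/4 > 0" using e by simp
  obtain \<delta> where \<delta>: "\<delta> > 0" "\<forall>n t y y'. t \<in> {0..T} \<longrightarrow> y \<in> E \<longrightarrow> y' \<in> E \<longrightarrow> \<bar>y' - y\<bar> < \<delta> \<longrightarrow>
     \<bar>wseq n t y' - wseq n t y - dseq n t y * (y' - y)\<bar> \<le> (e/4) * \<bar>y' - y\<bar>"
    using w_lin[OF e4] by (elim exE conjE) (rule that; assumption)
  define \<epsilon> where "\<epsilon> = min (\<delta>/2) ((r - l)/2)"
  have \<epsilon>: "\<epsilon> > 0" "\<epsilon> < \<delta>" "\<epsilon> \<le> (r - l)/2" unfolding \<epsilon>_def using \<delta>(1) lr by (auto simp: min_def)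
  have "e * \<epsilon> / 16 > 0" using e \<epsilon> by simp
  then obtain N where N0: "\<forall>n\<ge>N. norm (en n - 0) < e * \<epsilon> / 16"
    using LIMSEQ_D[OF en_lim] by blast
  have N: "\<forall>n\<ge>N. en n < e * \<epsilon> / 16" using N0 by auto
  show "\<exists>M. \<forall>x\<in>{0..T} \<times> E. \<forall>m\<ge>M. \<forall>n\<ge>M. dist (dseq m (fst x) (snd x)) (dseq n (fst x) (snd x)) < e"
  proof (intro exI[of _ N] ballI allI impI)
    fix p m n assume p: "p \<in> {0..T} \<times> E" and m: "m \<ge> N" and n: "n \<ge> N"
    obtain t y where pp: "p = (t,y)" by force
    have t: "t \<in> {0..T}" and y: "y \<in> E" using p pp by auto
    define y1 where "y1 = (if y + \<epsilon> \<le> r then y + \<epsilon> else y - \<epsilon>)"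
    have y1: "y1 \<in> E" "\<bar>y1 - y\<bar> = \<epsilon>" unfolding y1_def using y \<epsilon> by auto
    have W: "\<bar>wseq k t y1 - wseq k t y - dseq k t y * (y1 - y)\<bar> \<le> (e/4) * \<epsilon>" for k
      using \<delta>(2) t y y1 \<epsilon>(2) by fastforce
    have U: "\<bar>u t x - u t l - wseq k t x\<bar> \<le> e * \<epsilon> / 16" if "k \<ge> N" "x \<in> E" for k x
      using err2[OF t that(2), of k] N that(1) by force
    have lin6: "\<bar>P - Q\<bar> \<le> 2 * \<alpha> + 4 * \<beta>"
      if "\<bar>a - b - P\<bar> \<le> \<alpha>" "\<bar>c - d' - Q\<bar> \<le> \<alpha>" "\<bar>U1 - a\<bar> \<le> \<beta>" "\<bar>U1 - c\<bar> \<le> \<beta>"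
        "\<bar>U0 - b\<bar> \<le> \<beta>" "\<bar>U0 - d'\<bar> \<le> \<beta>" for a b c d' P Q U1 U0 \<alpha> \<beta> :: real
      using that by linarith
    have "\<bar>dseq m t y * (y1 - y) - dseq n t y * (y1 - y)\<bar> \<le> 2 * ((e/4) * \<epsilon>) + 4 * (e * \<epsilon> / 16)"
      by (rule lin6[OF W[of m] W[of n] U[OF m y1(1)] U[OF n y1(1)] U[OF m y] U[OF n y]])
    then have "\<bar>(dseq m t y - dseq n t y) * (y1 - y)\<bar> \<le> (e/4) * \<epsilon> + (e/4) * \<epsilon> + 4 * (e * \<epsilon> / 16)"
      by (simp add: algebra_simps)
    then have "\<bar>dseq m t y - dseq n t y\<bar> * \<epsilon> \<le> (e/4) * \<epsilon> + (e/4) * \<epsilon> + 4 * (e * \<epsilon> / 16)"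
      unfolding abs_mult y1(2) .
    moreover have "(e/4) * \<epsilon> + (e/4) * \<epsilon> + 4 * (e * \<epsilon> / 16) = (3/4) * e * \<epsilon>" by (simp add: field_simps)
    ultimately have "\<bar>dseq m t y - dseq n t y\<bar> * \<epsilon> \<le> (3/4) * e * \<epsilon>" by linarith
    moreover have "(3/4) * e * \<epsilon> < e * \<epsilon>" using e \<epsilon> by simp
    ultimately have "\<bar>dseq m t y - dseq n t y\<bar> * \<epsilon> < e * \<epsilon>" by linarith
    then have "\<bar>dseq m t y - dseq n t y\<bar> < e" using \<epsilon>(1) by simp
    then show "dist (dseq m (fst p) (snd p)) (dseq n (fst p) (snd p)) < e" unfolding pp dist_real_def by simp
  qed
qed

lemma main_deriv: "\<exists>dd. nice dd \<and> (\<forall>t\<in>{0..T}. \<forall>y\<in>E. (u t has_real_derivative dd t y) (at y within E))"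
proof -
  obtain dl where dl: "uniform_limit ({0..T} \<times> E) (\<lambda>n p. dseq n (fst p) (snd p)) dl sequentially"
    using Cauchy_uniformly_convergent[OF d_cauchy] unfolding uniformly_convergent_on_def by blast
  define dd where "dd t y = dl (t,y)" for t y
  have pw: "(\<lambda>n. dseq n t y) \<longlonglongrightarrow> dd t y" if "t \<in> {0..T}" "y \<in> E" for t y
    using tendsto_uniform_limitI[OF dl, of "(t,y)"] that unfolding dd_def by simp
  have cont: "continuous_on ({0..T} \<times> E) dl"
  proof (rule uniform_limit_theorem[OF _ dl])
    show "\<forall>\<^sub>F n in sequentially. continuous_on ({0..T} \<times> E) (\<lambda>p. dseq n (fst p) (snd p))"
      using nice_dseq unfolding nice_def by (simp add: case_prod_beta)
  qed simp
  have nice: "nice dd"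
    unfolding nice_def
  proof (intro conjI ballI)
    show "continuous_on ({0..T} \<times> E) (\<lambda>(s,x). dd s x)" unfolding dd_def using cont by (simp add: case_prod_beta)
    fix s x assume s: "s \<in> {0..T}" and x: "x \<in> E"
    have "(\<lambda>n. \<bar>dseq n s x\<bar>) \<longlonglongrightarrow> \<bar>dd s x\<bar>" by (intro tendsto_rabs pw s x)
    then show "\<bar>dd s x\<bar> \<le> Aa * exp (Cc * (T - s))"
      by (rule LIMSEQ_le_const2) (use nice_dseq s x in \<open>auto simp: nice_def\<close>)
  qed
  have wl: "(\<lambda>n. wseq n t x) \<longlonglongrightarrow> u t x - u t l" if "t \<in> {0..T}" "x \<in> E" for t x
  proof -
    have "(\<lambda>n. (u t x - u t l) - wseq n t x) \<longlonglongrightarrow> 0"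
      by (rule Lim_null_comparison[OF _ en_lim]) (use err2[OF that] in simp)
    then have "(\<lambda>n. (u t x - u t l) - ((u t x - u t l) - wseq n t x)) \<longlonglongrightarrow> (u t x - u t l) - 0"
      by (intro tendsto_diff tendsto_const)
    then show ?thesis by simp
  qed
  have der: "(u t has_real_derivative dd t y) (at y within E)" if t: "t \<in> {0..T}" and y: "y \<in> E" for t y
  proof (rule deriv_from_ud)
    fix \<eta> :: real assume \<eta>: "\<eta> > 0"
    obtain \<delta> where \<delta>: "\<delta> > 0" "\<forall>n t y y'. t \<in> {0..T} \<longrightarrow> y \<in> E \<longrightarrow> y' \<in> E \<longrightarrow> \<bar>y' - y\<bar> < \<delta> \<longrightarrow>
       \<bar>wseq n t y' - wseq n t y - dseq n t y * (y' - y)\<bar> \<le> \<eta> * \<bar>y' - y\<bar>"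
      using w_lin[OF \<eta>] by (elim exE conjE) (rule that; assumption)
    show "\<exists>\<delta>>0. \<forall>y'\<in>E. \<bar>y' - y\<bar> < \<delta> \<longrightarrow> \<bar>u t y' - u t y - dd t y * (y' - y)\<bar> \<le> \<eta> * \<bar>y' - y\<bar>"
    proof (intro exI[of _ \<delta>] conjI ballI impI \<delta>(1))
      fix y' assume y': "y' \<in> E" and yy: "\<bar>y' - y\<bar> < \<delta>"
      have lim: "(\<lambda>n. \<bar>wseq n t y' - wseq n t y - dseq n t y * (y' - y)\<bar>) \<longlonglongrightarrow>
          \<bar>(u t y' - u t l) - (u t y - u t l) - dd t y * (y' - y)\<bar>"
        by (intro tendsto_rabs tendsto_diff tendsto_mult wl pw t y y' tendsto_const)
      have "\<bar>(u t y' - u t l) - (u t y - u t l) - dd t y * (y' - y)\<bar> \<le> \<eta> * \<bar>y' - y\<bar>"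
        by (rule LIMSEQ_le_const2[OF lim]) (use \<delta>(2) t y y' yy in blast)
      then show "\<bar>u t y' - u t y - dd t y * (y' - y)\<bar> \<le> \<eta> * \<bar>y' - y\<bar>" by simp
    qed
  qed
  show ?thesis using nice der by blast
qed

end


context setting begin

lemma u_T: assumes z: "z \<in> E" shows "u T z = h z"
proof -
  have T0: "T \<in> {0..T}" using T by simp
  have A: "((\<lambda>s. g s (u s) (Z T z s)) has_integral (u T z - h (Z T z T))) {T..T}" using u_repr T0 z by blast
  have B: "((\<lambda>s. g s (u s) (Z T z s)) has_integral 0) (cbox T T)" by (rule has_integral_refl(1))
  then have B': "((\<lambda>s. g s (u s) (Z T z s)) has_integral 0) {T..T}" by (simp only: box_real(2))
  from has_integral_unique[OF A B'] Zt[OF T0 z] show ?thesis by simp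
qed

lemma u_flow: assumes t: "t \<in> {0..T}" and z: "z \<in> E" and \<tau>: "\<tau> \<in> {t..T}"
  shows "((\<lambda>s. g s (u s) (Z t z s)) has_integral (u t z - u \<tau> (Z t z \<tau>))) {t..\<tau>}"
proof -
  define X where "X = Z t z \<tau>"
  have \<tau>0: "\<tau> \<in> {0..T}" using t \<tau> by auto
  have X: "X \<in> E" unfolding X_def using Zin[OF t z \<tau>] .
  have A: "((\<lambda>s. g s (u s) (Z t z s)) has_integral (u t z - h (Z t z T))) {t..T}" using u_repr t z by blast
  have B0: "((\<lambda>s. g s (u s) (Z \<tau> X s)) has_integral (u \<tau> X - h (Z \<tau> X T))) {\<tau>..T}" using u_repr \<tau>0 X by blast
  have fl: "Z \<tau> X s = Z t z s" if "s \<in> {\<tau>..T}" for s unfolding X_def by (rule flow[OF t z \<tau> that])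
  have B: "((\<lambda>s. g s (u s) (Z t z s)) has_integral (u \<tau> X - h (Z t z T))) {\<tau>..T}"
  proof -
    have "((\<lambda>s. g s (u s) (Z \<tau> X s)) has_integral (u \<tau> X - h (Z t z T))) {\<tau>..T}"
      using B0 fl[of T] \<tau> by simp
    then show ?thesis by (rule has_integral_eq[rotated]) (simp add: fl)
  qed
  have iA: "(\<lambda>s. g s (u s) (Z t z s)) integrable_on {t..\<tau>}"
    by (rule integrable_subinterval_real[OF has_integral_integrable[OF A]]) (use \<tau> in auto)
  have "integral {t..\<tau>} (\<lambda>s. g s (u s) (Z t z s)) + integral {\<tau>..T} (\<lambda>s. g s (u s) (Z t z s)) = integral {t..T} (\<lambda>s. g s (u s) (Z t z s))"
    by (rule Henstock_Kurzweil_Integration.integral_combine) (use \<tau> A in auto)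
  then have "integral {t..\<tau>} (\<lambda>s. g s (u s) (Z t z s)) = u t z - u \<tau> X"
    using integral_unique[OF A] integral_unique[OF B] by simp
  then show ?thesis unfolding X_def[symmetric] using iA by (metis has_integral_integral)
qed

lemma final:
  assumes nd: "nice dd" and du: "\<And>t y. t \<in> {0..T} \<Longrightarrow> y \<in> E \<Longrightarrow> (u t has_real_derivative dd t y) (at y within E)"
    and t0: "t0 \<in> {0..T}" and z: "z \<in> E"
  shows "((\<lambda>s. b s z * dd s z + g s (u s) z) has_integral (u t0 z - h z)) {t0..T}"
proof -
  define G where "G s = g s (u s)" for s
  have C1: "C1b_deriv E (u s) (dd s)" if s: "s \<in> {0..T}" for s
    unfolding C1b_deriv_def
  proof (intro conjI)
    show "continuous_on E (u s)" using u_slice[OF s] .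
    show "continuous_on E (dd s)" using nd s unfolding nice_def by (intro cont_slice) auto
    show "\<exists>M. \<forall>z\<in>E. \<bar>dd s z\<bar> \<le> M" using nice_bnd[OF nd s] by blast
    show "\<forall>z\<in>E. (u s has_real_derivative dd s z) (at z within E)" using du s by blast
  qed
  have Gd: "(G s has_real_derivative ghat s (dd s) x) (at x within E)" if "s \<in> {0..T}" "x \<in> E" for s x
    unfolding G_def using b2_deriv that C1 by blast
  have GQ: "G s x - G s l = Q dd s x" if s: "s \<in> {0..T}" and x: "x \<in> E" for s x
  proof -
    have "(ghat s (dd s) has_integral (G s x - G s l)) {l..x}"
    proof (rule fundamental_theorem_of_calculus)
      show "l \<le> x" using x by simp
      fix w assume w: "w \<in> {l..x}"
      then have wE: "w \<in> E" using x by auto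
      have "(G s has_real_derivative ghat s (dd s) w) (at w within {l..x})"
        by (rule has_field_derivative_subset[OF Gd[OF s wE]]) (use x in auto)
      then show "(G s has_vector_derivative ghat s (dd s) w) (at w within {l..x})"
        by (simp add: has_real_derivative_iff_has_vector_derivative)
    qed
    then show ?thesis unfolding Q_def by (simp add: integral_unique)
  qed
  have GQ2: "G s x - G s x' = Q dd s x - Q dd s x'" if "s \<in> {0..T}" "x \<in> E" "x' \<in> E" for s x x'
    using GQ[OF that(1,2)] GQ[OF that(1,3)] by simp
  have Qlip: "\<bar>Q dd s x - Q dd s x'\<bar> \<le> Gb * \<bar>x - x'\<bar>" if "s \<in> {0..T}" "x \<in> E" "x' \<in> E" for s x x'
    using field_differentiable_bound[of E "Q dd s" "ghat s (dd s)" Gb x x'] Q_deriv[OF nd that(1)] gh_bnd(2)[OF nd that(1)] that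
    by auto
  have bzc: "continuous_on {t..T} (\<lambda>s. b s z * dd s z)" if "t \<in> {0..T}" for t
  proof -
    have ddc: "continuous_on ({0..T} \<times> E) (\<lambda>(s,x). dd s x)" using nd unfolding nice_def by simp
    have "continuous_on {t..T} (\<lambda>s. b s z)" by (rule comp_cont[OF b_cont continuous_on_const]) (use that z in auto)
    moreover have "continuous_on {t..T} (\<lambda>s. dd s z)"
      by (rule comp_cont[OF ddc continuous_on_const]) (use that z in auto)
    ultimately show ?thesis by (rule continuous_on_mult)
  qed
  have Gz_int: "(\<lambda>s. G s z) integrable_on {t..\<tau>}" if t: "t \<in> {0..T}" and \<tau>: "\<tau> \<in> {t..T}" for t \<tau>
  proof -
    have hA: "((\<lambda>s. G s (Z t z s)) has_integral (u t z - h (Z t z T))) {t..T}"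
      using u_repr t z unfolding G_def by blast
    have A: "(\<lambda>s. G s (Z t z s)) integrable_on {t..\<tau>}"
      by (rule integrable_subinterval_real[OF has_integral_integrable[OF hA]]) (use \<tau> in auto)
    have B: "(\<lambda>s. Q dd s (Z t z s) - Q dd s z) integrable_on {t..\<tau>}"
    proof (rule integrable_continuous_interval)
      have q1: "continuous_on {t..T} (\<lambda>s. Q dd s (Z t z s))" by (rule QZ_cont[OF nd t z])
      have q2: "continuous_on {t..T} (\<lambda>s. Q dd s z)"
        by (rule comp_cont[OF Q_cont[OF nd] continuous_on_const]) (use t z in auto)
      show "continuous_on {t..\<tau>} (\<lambda>s. Q dd s (Z t z s) - Q dd s z)"
        by (rule continuous_on_subset[OF continuous_on_diff[OF q1 q2]]) (use \<tau> in auto)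
    qed
    have "(\<lambda>s. G s (Z t z s) - (Q dd s (Z t z s) - Q dd s z)) integrable_on {t..\<tau>}" by (rule integrable_diff[OF A B])
    moreover have "G s (Z t z s) - (Q dd s (Z t z s) - Q dd s z) = G s z" if "s \<in> {t..\<tau>}" for s
    proof -
      have s: "s \<in> {0..T}" "s \<in> {t..T}" using that t \<tau> by auto
      show ?thesis using GQ2[OF s(1) Zin[OF t z s(2)] z] by simp
    qed
    ultimately show ?thesis by (rule integrable_eq)
  qed
  define Fi where "Fi s = b s z * dd s z + G s z" for s
  have Fi_int: "Fi integrable_on {t..\<tau>}" if "t \<in> {0..T}" "\<tau> \<in> {t..T}" for t \<tau>
    unfolding Fi_def
    by (intro integrable_add Gz_int that integrable_continuous_interval continuous_on_subset[OF bzc[OF that(1)]]) (use that in auto)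
  define Fz where "Fz t = u t z - h z - integral {t..T} Fi" for t
  have key: "\<exists>\<delta>>0. \<forall>t \<tau>. t \<in> {0..T} \<longrightarrow> \<tau> \<in> {t..T} \<longrightarrow> \<tau> - t < \<delta> \<longrightarrow> \<bar>Fz t - Fz \<tau>\<bar> \<le> \<eta> * (\<tau> - t)"
    if \<eta>: "\<eta> > 0" for \<eta>
  proof -
    define \<eta>1 where "\<eta>1 = \<eta> / (4 * (B + 1))"
    have \<eta>1: "\<eta>1 > 0" unfolding \<eta>1_def using \<eta> B(1) by simp
    have ddc: "continuous_on ({0..T} \<times> E) (\<lambda>(s,x). dd s x)" using nd unfolding nice_def by simp
    obtain \<delta>1 where \<delta>1: "\<delta>1 > 0" "\<forall>a b a' b'. (a,b)\<in>{0..T} \<times> E \<longrightarrow> (a',b')\<in>{0..T} \<times> E \<longrightarrow> \<bar>a-a'\<bar> < \<delta>1 \<longrightarrow> \<bar>b-b'\<bar> < \<delta>1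
            \<longrightarrow> \<bar>(\<lambda>(s,x). dd s x) (a,b) - (\<lambda>(s,x). dd s x) (a',b')\<bar> < \<eta>1"
      using uc_pair[OF compact_Times[OF compact_Icc compact_Icc] ddc \<eta>1] by (elim exE conjE) (rule that; assumption)
    define K' where "K' = Rs * Mb * B + Gb * B + 1"
    have K': "K' \<ge> 1" unfolding K'_def using Rs_pos Mb(1) B(1) Gb_0 by simp
    define \<delta> where "\<delta> = min (\<delta>1 / (B + 1)) (\<eta> / (4 * K'))"
    have \<delta>: "\<delta> > 0" unfolding \<delta>_def using \<delta>1(1) B(1) \<eta> K' by simp
    have \<delta>\<delta>1: "\<delta> \<le> \<delta>1"
    proof -
      have "\<delta> \<le> \<delta>1 / (B + 1)" unfolding \<delta>_def by simp
      moreover have "\<delta>1 / (B + 1) \<le> \<delta>1" using \<delta>1(1) B(1) by (simp add: divide_le_eq)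
      ultimately show ?thesis by linarith
    qed
    have B\<delta>: "B * \<delta> < \<delta>1"
    proof -
      have "B * \<delta> \<le> B * (\<delta>1 / (B + 1))" unfolding \<delta>_def using B(1) by (intro mult_left_mono) auto
      also have "\<dots> < \<delta>1" using \<delta>1(1) B(1) by (simp add: field_simps)
      finally show ?thesis .
    qed
    have K\<delta>: "K' * \<delta> \<le> \<eta> / 4" unfolding \<delta>_def using K' by (simp add: min_def field_simps)
    show ?thesis
    proof (intro exI[of _ \<delta>] conjI allI impI \<delta>)
      fix t \<tau> assume t: "t \<in> {0..T}" and \<tau>: "\<tau> \<in> {t..T}" and td: "\<tau> - t < \<delta>"
      have \<tau>0: "\<tau> \<in> {0..T}" using t \<tau> by auto
      define X where "X = Z t z \<tau>"
      have XE: "X \<in> E" unfolding X_def by (rule Zin[OF t z \<tau>])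
      have Zs: "\<bar>Z t z s - z\<bar> \<le> B * (s - t)" if "s \<in> {t..T}" for s
        using Zlip_s[OF t z that, of t] Zt[OF t z] that by simp
      have Xz: "\<bar>X - z\<bar> \<le> B * (\<tau> - t)" unfolding X_def by (rule Zs[OF \<tau>])
      have Xz\<delta>: "\<bar>X - z\<bar> < \<delta>1"
      proof -
        have "B * (\<tau> - t) \<le> B * \<delta>" using td B(1) by (intro mult_left_mono) auto
        then show ?thesis using Xz B\<delta> by linarith
      qed
      have err1: "\<bar>u \<tau> X - u \<tau> z - dd \<tau> z * (X - z)\<bar> \<le> \<eta>1 * \<bar>X - z\<bar>"
      proof (rule unif_deriv[of E])
        fix \<xi> assume \<xi>: "\<xi> \<in> E" "\<bar>\<xi> - z\<bar> \<le> \<bar>X - z\<bar>"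
        have m: "(\<tau>, \<xi>) \<in> {0..T} \<times> E" "(\<tau>, z) \<in> {0..T} \<times> E" "\<bar>\<tau> - \<tau>\<bar> < \<delta>1" "\<bar>\<xi> - z\<bar> < \<delta>1"
          using \<tau>0 \<xi> z Xz\<delta> \<delta>1(1) by auto
        have "\<bar>dd \<tau> \<xi> - dd \<tau> z\<bar> < \<eta>1" using \<delta>1(2)[rule_format, OF m] by simp
        then show "\<bar>dd \<tau> \<xi> - dd \<tau> z\<bar> \<le> \<eta>1" by simp
      qed (use du \<tau>0 z XE in auto)
      have e1: "\<eta>1 * \<bar>X - z\<bar> \<le> (\<eta>/4) * (\<tau> - t)"
      proof -
        have "\<eta>1 * \<bar>X - z\<bar> \<le> \<eta>1 * (B * (\<tau> - t))" using Xz \<eta>1 by (intro mult_left_mono) auto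
        also have "\<dots> \<le> \<eta>1 * ((B + 1) * (\<tau> - t))" using \<eta>1 \<tau> by (intro mult_left_mono) (auto simp: algebra_simps)
        also have "\<dots> = (\<eta>/4) * (\<tau> - t)" unfolding \<eta>1_def using B(1) by (simp add: field_simps)
        finally show ?thesis .
      qed
      define H where "H s = dd \<tau> z * b s (Z t z s) - b s z * dd s z + (Q dd s (Z t z s) - Q dd s z)" for s
      have Hb: "\<bar>H s\<bar> \<le> K' * \<delta> + B * \<eta>1" if s: "s \<in> {t..\<tau>}" for s
      proof -
        have s0: "s \<in> {0..T}" "s \<in> {t..T}" using s t \<tau> by auto
        have zs: "Z t z s \<in> E" using Zin[OF t z s0(2)] .
        have st: "s - t \<le> \<delta>" using s td by auto
        have h1: "\<bar>dd \<tau> z\<bar> \<le> Rs" using nice_bnd[OF nd \<tau>0 z] by simp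
        have h2: "\<bar>b s (Z t z s) - b s z\<bar> \<le> Mb * (B * \<delta>)"
        proof -
          have "\<bar>b s (Z t z s) - b s z\<bar> \<le> Mb * \<bar>Z t z s - z\<bar>" by (rule b_lip[OF s0(1) zs z])
          also have "\<dots> \<le> Mb * (B * (s - t))" using Zs[OF s0(2)] Mb(1) by (intro mult_left_mono) auto
          also have "\<dots> \<le> Mb * (B * \<delta>)" using st Mb(1) B(1) by (intro mult_left_mono) auto
          finally show ?thesis .
        qed
        have h3: "\<bar>dd \<tau> z - dd s z\<bar> \<le> \<eta>1"
        proof -
          have m: "(\<tau>, z) \<in> {0..T} \<times> E" "(s, z) \<in> {0..T} \<times> E" "\<bar>\<tau> - s\<bar> < \<delta>1" "\<bar>z - z\<bar> < \<delta>1"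
            using \<tau>0 s0 z td s \<delta>\<delta>1 \<delta>1(1) by auto
          show ?thesis using \<delta>1(2)[rule_format, OF m] by simp
        qed
        have h4: "\<bar>b s z\<bar> \<le> B" by (rule B(2)[OF s0(1) z])
        have h5: "\<bar>Q dd s (Z t z s) - Q dd s z\<bar> \<le> Gb * (B * \<delta>)"
        proof -
          have "\<bar>Q dd s (Z t z s) - Q dd s z\<bar> \<le> Gb * \<bar>Z t z s - z\<bar>" by (rule Qlip[OF s0(1) zs z])
          also have "\<dots> \<le> Gb * (B * (s - t))" using Zs[OF s0(2)] Gb_0 by (intro mult_left_mono) auto
          also have "\<dots> \<le> Gb * (B * \<delta>)" using st Gb_0 B(1) by (intro mult_left_mono) auto
          finally show ?thesis .
        qed
        have "dd \<tau> z * b s (Z t z s) - b s z * dd s z = dd \<tau> z * (b s (Z t z s) - b s z) + b s z * (dd \<tau> z - dd s z)"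
          by (simp add: algebra_simps)
        then have "\<bar>dd \<tau> z * b s (Z t z s) - b s z * dd s z\<bar> \<le> \<bar>dd \<tau> z\<bar> * \<bar>b s (Z t z s) - b s z\<bar> + \<bar>b s z\<bar> * \<bar>dd \<tau> z - dd s z\<bar>"
          by (simp add: abs_mult[symmetric] abs_triangle_ineq)
        also have "\<dots> \<le> Rs * (Mb * (B * \<delta>)) + B * \<eta>1"
          by (intro add_mono mult_mono h1 h2 h3 h4) (use Rs_pos B(1) in auto)
        finally have "\<bar>H s\<bar> \<le> Rs * (Mb * (B * \<delta>)) + B * \<eta>1 + Gb * (B * \<delta>)"
          unfolding H_def using h5 by linarith
        also have "\<dots> \<le> K' * \<delta> + B * \<eta>1" unfolding K'_def using \<delta> by (simp add: algebra_simps)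
        finally show ?thesis .
      qed
      have Hint: "H integrable_on {t..\<tau>}"
      proof -
        have q1: "continuous_on {t..T} (\<lambda>s. Q dd s (Z t z s))" by (rule QZ_cont[OF nd t z])
        have q2: "continuous_on {t..T} (\<lambda>s. Q dd s z)"
          by (rule comp_cont[OF Q_cont[OF nd] continuous_on_const]) (use t z in auto)
        have c: "continuous_on {t..T} H" unfolding H_def
          by (intro continuous_on_add continuous_on_diff continuous_on_mult continuous_on_const bZcont[OF t z] bzc[OF t] q1 q2)
        show ?thesis by (rule integrable_continuous_interval[OF continuous_on_subset[OF c]]) (use \<tau> in auto)
      qed
      have IH: "\<bar>integral {t..\<tau>} H\<bar> \<le> (K' * \<delta> + B * \<eta>1) * (\<tau> - t)"
        by (rule int_bound[OF _ Hint Hb]) (use \<tau> in auto)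
      have bZi: "(\<lambda>s. b s (Z t z s)) integrable_on {t..\<tau>}" by (rule bZ_int[OF t z \<tau>])
      have GZi: "((\<lambda>s. G s (Z t z s)) has_integral (u t z - u \<tau> X)) {t..\<tau>}"
        unfolding G_def X_def by (rule u_flow[OF t z \<tau>])
      have Xint: "X - z = integral {t..\<tau>} (\<lambda>s. b s (Z t z s))" unfolding X_def using Zint(2)[OF t z \<tau>] by simp
      have "integral {t..\<tau>} H = integral {t..\<tau>} (\<lambda>s. dd \<tau> z * b s (Z t z s) + G s (Z t z s) - Fi s)"
      proof (rule integral_cong)
        fix s assume s: "s \<in> {t..\<tau>}"
        then have s0: "s \<in> {0..T}" "s \<in> {t..T}" using t \<tau> by auto
        show "H s = dd \<tau> z * b s (Z t z s) + G s (Z t z s) - Fi s"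
          unfolding H_def Fi_def using GQ2[OF s0(1) Zin[OF t z s0(2)] z] by simp
      qed
      also have "\<dots> = dd \<tau> z * (X - z) + (u t z - u \<tau> X) - integral {t..\<tau>} Fi"
      proof -
        have i1: "(\<lambda>s. dd \<tau> z * b s (Z t z s)) integrable_on {t..\<tau>}" by (rule integrable_on_mult_right[OF bZi])
        have "integral {t..\<tau>} (\<lambda>s. dd \<tau> z * b s (Z t z s) + G s (Z t z s) - Fi s)
            = integral {t..\<tau>} (\<lambda>s. dd \<tau> z * b s (Z t z s)) + integral {t..\<tau>} (\<lambda>s. G s (Z t z s)) - integral {t..\<tau>} Fi"
          using integral_diff[OF integrable_add[OF i1 has_integral_integrable[OF GZi]] Fi_int[OF t \<tau>]]
                integral_add[OF i1 has_integral_integrable[OF GZi]] by simp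
        then show ?thesis using Xint integral_unique[OF GZi] by simp
      qed
      finally have IHeq: "integral {t..\<tau>} H = dd \<tau> z * (X - z) + (u t z - u \<tau> X) - integral {t..\<tau>} Fi" .
      have split: "integral {t..T} Fi = integral {t..\<tau>} Fi + integral {\<tau>..T} Fi"
        by (rule int_split) (use \<tau> Fi_int[OF t, of T] t in auto)
      have FF: "Fz t - Fz \<tau> = (u \<tau> X - u \<tau> z - dd \<tau> z * (X - z)) + integral {t..\<tau>} H"
        unfolding Fz_def using IHeq split by (simp add: algebra_simps)
      have "\<bar>Fz t - Fz \<tau>\<bar> \<le> (\<eta>/4) * (\<tau> - t) + (K' * \<delta> + B * \<eta>1) * (\<tau> - t)"
        using FF err1 e1 IH by linarith
      also have "\<dots> \<le> (\<eta>/4) * (\<tau> - t) + (\<eta>/4 + \<eta>/4) * (\<tau> - t)"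
      proof -
        have "B * \<eta>1 \<le> \<eta>/4" unfolding \<eta>1_def using B(1) \<eta> by (simp add: field_simps)
        then have "K' * \<delta> + B * \<eta>1 \<le> \<eta>/4 + \<eta>/4" using K\<delta> by linarith
        then have "(K' * \<delta> + B * \<eta>1) * (\<tau> - t) \<le> (\<eta>/4 + \<eta>/4) * (\<tau> - t)"
          by (rule mult_right_mono) (use \<tau> in auto)
        then show ?thesis by linarith
      qed
      also have "\<dots> \<le> \<eta> * (\<tau> - t)"
      proof -
        have "0 \<le> \<eta> * (\<tau> - t)" using \<tau> \<eta> by simp
        moreover have "(\<eta>/4) * (\<tau> - t) + (\<eta>/4 + \<eta>/4) * (\<tau> - t) = (3/4) * (\<eta> * (\<tau> - t))"
          by (simp add: algebra_simps)
        ultimately show ?thesis by linarith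
      qed
      finally show "\<bar>Fz t - Fz \<tau>\<bar> \<le> \<eta> * (\<tau> - t)" .
    qed
  qed
  have dF: "(Fz has_real_derivative 0) (at t within {0..T})" if t: "t \<in> {0..T}" for t
  proof (rule deriv_from_ud)
    fix \<eta> :: real assume \<eta>: "\<eta> > 0"
    obtain \<delta> where \<delta>: "\<delta> > 0" "\<forall>t \<tau>. t \<in> {0..T} \<longrightarrow> \<tau> \<in> {t..T} \<longrightarrow> \<tau> - t < \<delta> \<longrightarrow> \<bar>Fz t - Fz \<tau>\<bar> \<le> \<eta> * (\<tau> - t)"
      using key[OF \<eta>] by (elim exE conjE) (rule that; assumption)
    show "\<exists>\<delta>>0. \<forall>y'\<in>{0..T}. \<bar>y' - t\<bar> < \<delta> \<longrightarrow> \<bar>Fz y' - Fz t - 0 * (y' - t)\<bar> \<le> \<eta> * \<bar>y' - t\<bar>"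
    proof (intro exI[of _ \<delta>] conjI ballI impI \<delta>(1))
      fix t' assume t': "t' \<in> {0..T}" and tt: "\<bar>t' - t\<bar> < \<delta>"
      show "\<bar>Fz t' - Fz t - 0 * (t' - t)\<bar> \<le> \<eta> * \<bar>t' - t\<bar>"
      proof (cases "t \<le> t'")
        case True
        then have "\<bar>Fz t - Fz t'\<bar> \<le> \<eta> * (t' - t)" using \<delta>(2) t t' tt by auto
        then show ?thesis using True by (simp add: abs_minus_commute)
      next
        case False
        then have "\<bar>Fz t' - Fz t\<bar> \<le> \<eta> * (t - t')" using \<delta>(2) t t' tt by auto
        then show ?thesis using False by simp
      qed
    qed
  qed
  obtain c where c: "\<forall>x\<in>{0..T}. Fz x = c"
    using has_field_derivative_zero_constant[of "{0..T}" Fz] dF by auto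
  have T0: "T \<in> {0..T}" using T by simp
  have "Fz T = 0"
  proof -
    have "integral (cbox T T) Fi = 0" by (rule integral_refl)
    then have "integral {T..T} Fi = 0" by (simp only: box_real(2))
    then show ?thesis unfolding Fz_def using u_T[OF z] by simp
  qed
  then have "Fz t0 = 0" using c t0 T0 by auto
  then have "integral {t0..T} Fi = u t0 z - h z" unfolding Fz_def by simp
  moreover have "Fi integrable_on {t0..T}" using Fi_int[OF t0, of T] t0 by auto
  ultimately show ?thesis unfolding Fi_def G_def by (metis has_integral_integral)
qed

end


theorem theorem3p7:
  fixes T l r L L' K :: real
    and b bz :: "real \<Rightarrow> real \<Rightarrow> real"
    and Z :: "real \<Rightarrow> real \<Rightarrow> real \<Rightarrow> real"
    and g ghat :: "real \<Rightarrow> (real \<Rightarrow> real) \<Rightarrow> (real \<Rightarrow> real)"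
    and h :: "real \<Rightarrow> real"
    and u :: "real \<Rightarrow> real \<Rightarrow> real"
  defines "E \<equiv> {l..r}"
  assumes lr: "l < r" and T: "0 < T"
    \<comment> \<open>b continuous; the characteristics Z stay in E and solve the ODE\<close>
    and b_cont: "continuous_on ({0..T} \<times> E) (\<lambda>(t, z). b t z)"
    and Z_in: "\<forall>t\<in>{0..T}. \<forall>z\<in>E. \<forall>s\<in>{t..T}. Z t z s \<in> E"
    and Z_ode: "\<forall>t\<in>{0..T}. \<forall>z\<in>E. \<forall>s\<in>{t..T}.
                  ((\<lambda>r. b r (Z t z r)) has_integral (Z t z s - z)) {t..s}"
    \<comment> \<open>(a-1)\<close>
    and a1: "local_lipschitz {0..T} E b"
    \<comment> \<open>(a-2)\<close>
    and g_Cb: "\<forall>t\<in>{0..T}. \<forall>v\<in>Cb E. g t v \<in> Cb E"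
    and a2: "\<forall>t\<in>{0..T}. \<forall>v1\<in>Cb E. \<forall>v2\<in>Cb E.
               supE E (\<lambda>z. g t v1 z - g t v2 z) \<le> L * supE E (\<lambda>z. v1 z - v2 z)"
    \<comment> \<open>(a-3)\<close>
    and a3: "h \<in> Cb E"
    \<comment> \<open>(b-1)\<close>
    and b1_deriv: "\<forall>t\<in>{0..T}. \<forall>z\<in>E. (b t has_real_derivative bz t z) (at z within E)"
    and b1_cont: "continuous_on ({0..T} \<times> E) (\<lambda>(t, z). bz t z)"
    and b1_bdd: "\<exists>M. \<forall>t\<in>{0..T}. \<forall>z\<in>E. \<bar>bz t z\<bar> \<le> M"
    \<comment> \<open>(b-2)\<close>
    and ghat_Cb: "\<forall>t\<in>{0..T}. \<forall>v\<in>Cb E. ghat t v \<in> Cb E"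
    and b2_deriv: "\<forall>t\<in>{0..T}. \<forall>v v'. C1b_deriv E v v' \<longrightarrow>
               (\<forall>z\<in>E. (g t v has_real_derivative ghat t v' z) (at z within E))"
    and ghat_cont: "\<forall>t\<in>{0..T}. \<forall>v\<in>Cb E. \<forall>\<epsilon>>0. \<exists>\<delta>>0. \<forall>t'\<in>{0..T}. \<forall>v'\<in>Cb E.
               \<bar>t' - t\<bar> < \<delta> \<and> supE E (\<lambda>z. v' z - v z) < \<delta> \<longrightarrow>
               supE E (\<lambda>z. ghat t' v' z - ghat t v z) < \<epsilon>"
    and ghat_bound: "\<forall>s\<in>{0..T}. \<forall>v\<in>Cb E. supE E (ghat s v) \<le> L' * supE E v + K"
    and ghat_unif: "\<forall>R>0. \<forall>\<epsilon>>0. \<exists>\<delta>>0.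
               \<forall>t\<in>{0..T}. \<forall>t'\<in>{0..T}. \<forall>v\<in>Cb E. \<forall>v'\<in>Cb E. \<forall>z\<in>E. \<forall>z'\<in>E.
               supE E v \<le> R \<and> supE E v' \<le> R \<and>
               \<bar>t - t'\<bar> < \<delta> \<and> supE E (\<lambda>y. v y - v' y) < \<delta> \<and> \<bar>z - z'\<bar> < \<delta> \<longrightarrow>
               \<bar>ghat t v z - ghat t' v' z'\<bar> < \<epsilon>"
    \<comment> \<open>(b-3)\<close>
    and b3: "\<exists>h'. C1b_deriv E h h'"
    \<comment> \<open>u is the (weak) solution given by the representation formula\<close>
    and u_cont: "continuous_on ({0..T} \<times> E) (\<lambda>(t, z). u t z)"
    and u_repr: "\<forall>t\<in>{0..T}. \<forall>z\<in>E.
               ((\<lambda>s. g s (u s) (Z t z s)) has_integral (u t z - h (Z t z T))) {t..T}"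
  shows "\<exists>uz. (\<forall>t\<in>{0..T}. \<forall>z\<in>E. ((\<lambda>y. u t y) has_real_derivative uz t z) (at z within E))
             \<and> (\<forall>t\<in>{0..T}. \<forall>z\<in>E.
                  ((\<lambda>s. b s z * uz s z + g s (u s) z) has_integral (u t z - h z)) {t..T})"
proof -
  obtain B0 where B0: "\<forall>x\<in>(\<lambda>(t, z). b t z) ` ({0..T} \<times> {l..r}). norm x \<le> B0"
    using compact_imp_bounded[OF compact_continuous_image[OF b_cont[unfolded E_def]]]
    unfolding bounded_iff by (auto simp: compact_Times)
  define B where "B = max B0 0"
  have B: "0 \<le> B" "\<And>t z. t \<in> {0..T} \<Longrightarrow> z \<in> {l..r} \<Longrightarrow> \<bar>b t z\<bar> \<le> B"
  proof -
    show "0 \<le> B" unfolding B_def by simp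
    fix t z assume "t \<in> {0..T}" "z \<in> {l..r}"
    then have "(\<lambda>(t, z). b t z) (t, z) \<in> (\<lambda>(t, z). b t z) ` ({0..T} \<times> {l..r})" by blast
    then have "norm (b t z) \<le> B0" using B0 by fastforce
    then show "\<bar>b t z\<bar> \<le> B" unfolding B_def by simp
  qed
  obtain M0 where M0: "\<forall>t\<in>{0..T}. \<forall>z\<in>E. \<bar>bz t z\<bar> \<le> M0" using b1_bdd by blast
  define Mb where "Mb = max M0 0"
  have Mb: "0 \<le> Mb" "\<And>t z. t \<in> {0..T} \<Longrightarrow> z \<in> {l..r} \<Longrightarrow> \<bar>bz t z\<bar> \<le> Mb"
    unfolding Mb_def using M0 unfolding E_def by force+
  obtain h' where hd: "C1b_deriv E h h'" using b3 by blast
  obtain H1 where H1: "\<forall>z\<in>E. \<bar>h' z\<bar> \<le> H1" using hd unfolding C1b_deriv_def by blast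
  have H1': "\<And>z. z \<in> {l..r} \<Longrightarrow> \<bar>h' z\<bar> \<le> H1" using H1 unfolding E_def by blast
  note facts = lr T b_cont[unfolded E_def] B Z_in[unfolded E_def] Z_ode[unfolded E_def]
    g_Cb[unfolded E_def] a2[unfolded E_def] b1_deriv[unfolded E_def] b1_cont[unfolded E_def] Mb
    ghat_Cb[unfolded E_def] b2_deriv[unfolded E_def] ghat_bound[unfolded E_def] ghat_unif[unfolded E_def]
    hd[unfolded E_def] H1' u_cont[unfolded E_def] u_repr[unfolded E_def]
  interpret S: setting T l r L L' K B Mb H1 b bz Z g ghat h h' u
    by unfold_locales (fact facts)+
  obtain dd where nd: "S.nice dd" and du: "\<forall>t\<in>{0..T}. \<forall>y\<in>{l..r}. (u t has_real_derivative dd t y) (at y within {l..r})"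
    using S.main_deriv by blast
  have fin: "((\<lambda>s. b s z * dd s z + g s (u s) z) has_integral (u t z - h z)) {t..T}"
    if "t \<in> {0..T}" "z \<in> {l..r}" for t z
    by (rule S.final[OF nd _ that]) (use du in blast)
  show ?thesis
    by (rule exI[of _ dd]) (use du fin in \<open>simp add: E_def\<close>)
qed

end
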